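(* Consider the $M_t^{B_t}/G_t/\infty$ queue described in the context, with $Q(0)=0$, and assume that, for a batch arriving at time $s$, given its size the amounts of work in the batch are i.i.d. with CDF $F_s$. Let $0=t_0<t_1<\dots<t_m$, $\alpha=(\alpha_1,\dots,\alpha_m)\in\mathbb{R}_+^m$, $\beta=(\beta_1,\dots,\beta_m)\in\mathbb{R}_+^m$. For $k\in\{1,\dots,m\}$, integer $b\ge1$ and $s\in[t_{k-1},t_k)$ define $$\gamma^{(m)}_{k,b,\alpha,\beta}(s):=1-e^{-b\sum_{x=k}^m\beta_x}\Big[1-\sum_{\ell=k+1}^m\big(1-e^{-\sum_{x=k}^{\ell-1}(\alpha_x-\beta_x)}\big)F_s(t_{\ell-1}-s,t_\ell-s]-\big(1-e^{-\sum_{x=k}^m(\alpha_x-\beta_x)}\big)\overline{F}_s(t_m-s)\Big]^b.$$ Then $$\mathbb{E}\Big[e^{-\sum_{k=1}^m(\alpha_kQ(t_k)+\beta_kD(t_k))}\Big]=\exp\Big(-\sum_{k=1}^m\sum_{b=1}^\infty\int_{t_{k-1}}^{t_k}\gamma^{(m)}_{k,b,\alpha,\beta}(s)\,\mathcal{P}_s(B_s=b)\,\lambda(s)\,ds\Big).$$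
   Context: Model ($M_t^{B_t}/G_t/\infty$ queue): batches of customers arrive at the points of a non-homogeneous Poisson process $\{A(t);t\ge0\}$ on $[0,\infty)$ with rate function $\lambda:[0,\infty)\to[0,\infty)$. A batch arriving at time $s$ has a random positive-integer size $B_s$ with law $\mathcal{P}_s(B_s=\cdot)$ depending on $s$; different batches are independent of each other and of the arrival process. There are infinitely many servers, so a customer arriving at time $s$ with work $S$ departs at time $s+S$. $Q(t)$ is the number of customers in the system at time $t$, $D(t)$ the number of departures in $(0,t]$. Notation: $\overline{F}_s(u)=1-F_s(u)$ and $F_s(a,b]:=F_s(b)-F_s(a)$. *)

theory Defs
  imports "HOL-Probability.Probability"
begin

text \<open>A batch mark: (batch size b, work amounts w 0, w 1, ...); only w 0 .. w (b-1) are used.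
  A realisation of the batch-arrival process is a set of points (s, b, w) in
  real \<times> mark: a batch of size b arriving at time s whose i-th customer (i < b) brings work w i.\<close>

type_synonym mark = "nat \<times> (nat \<Rightarrow> real)"

definition point_space :: "(real \<times> mark) measure" where
  "point_space = borel \<Otimes>\<^sub>M (count_space UNIV \<Otimes>\<^sub>M PiM UNIV (\<lambda>_::nat. borel))"

definition mark_law :: "(real \<Rightarrow> nat pmf) \<Rightarrow> (real \<Rightarrow> real measure) \<Rightarrow> real \<Rightarrow> mark measure" where
  "mark_law Bs W s = measure_pmf (Bs s) \<Otimes>\<^sub>M PiM UNIV (\<lambda>_::nat. W s)"

definition batch_intensity ::
  "(real \<Rightarrow> real) \<Rightarrow> (real \<Rightarrow> nat pmf) \<Rightarrow> (real \<Rightarrow> real measure) \<Rightarrow> (real \<times> mark) set \<Rightarrow> ennreal" where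
  "batch_intensity lam Bs W A =
     (\<integral>\<^sup>+ s. indicator {0..} s * ennreal (lam s) * emeasure (mark_law Bs W s) (Pair s -` A) \<partial>lborel)"

definition batch_poisson_process ::
  "'a measure \<Rightarrow> ('a \<Rightarrow> (real \<times> mark) set) \<Rightarrow> (real \<Rightarrow> real) \<Rightarrow> (real \<Rightarrow> nat pmf)
     \<Rightarrow> (real \<Rightarrow> real measure) \<Rightarrow> bool" where
  "batch_poisson_process M Pts lam Bs W \<longleftrightarrow>
     prob_space M \<and>
     (\<forall>(n::nat) (A :: nat \<Rightarrow> (real \<times> mark) set).
        (\<forall>i<n. A i \<in> sets point_space \<and> batch_intensity lam Bs W (A i) < \<infinity>) \<and>
        (\<forall>i<n. \<forall>j<n. i \<noteq> j \<longrightarrow> A i \<inter> A j = {}) \<longrightarrow>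
          (\<forall>i<n. (AE \<omega> in M. finite (Pts \<omega> \<inter> A i)) \<and>
                 (\<lambda>\<omega>. card (Pts \<omega> \<inter> A i)) \<in> measurable M (count_space UNIV) \<and>
                 (\<forall>k::nat. measure M {\<omega> \<in> space M. card (Pts \<omega> \<inter> A i) = k} =
                    enn2real (batch_intensity lam Bs W (A i)) ^ k / fact k
                      * exp (- enn2real (batch_intensity lam Bs W (A i))))) \<and>
          prob_space.indep_vars M (\<lambda>_. count_space UNIV) (\<lambda>i \<omega>. card (Pts \<omega> \<inter> A i)) {..<n})"

definition queue_Q :: "(real \<times> mark) set \<Rightarrow> real \<Rightarrow> nat" where
  "queue_Q P t = (\<Sum>(s, b, w) \<in> {p \<in> P. fst p \<le> t}. card {i. i < b \<and> t < s + w i})"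

definition queue_D :: "(real \<times> mark) set \<Rightarrow> real \<Rightarrow> nat" where
  "queue_D P t = (\<Sum>(s, b, w) \<in> {p \<in> P. fst p \<le> t}. card {i. i < b \<and> 0 < s + w i \<and> s + w i \<le> t})"

definition gamma_fun ::
  "(real \<Rightarrow> real \<Rightarrow> real) \<Rightarrow> nat \<Rightarrow> (nat \<Rightarrow> real) \<Rightarrow> nat \<Rightarrow> nat \<Rightarrow> (nat \<Rightarrow> real) \<Rightarrow> (nat \<Rightarrow> real) \<Rightarrow> real \<Rightarrow> real" where
  "gamma_fun F m t k b \<alpha> \<beta> s =
     1 - exp (- real b * (\<Sum>x=k..m. \<beta> x)) *
       (1 - (\<Sum>l=k+1..m. (1 - exp (- (\<Sum>x=k..l-1. \<alpha> x - \<beta> x))) * (F s (t l - s) - F s (t (l-1) - s)))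
          - (1 - exp (- (\<Sum>x=k..m. \<alpha> x - \<beta> x))) * (1 - F s (t m - s))) ^ b"

end

theory Submission
  imports Defs
begin

lemma poisson_laplace_single:
  fixes N :: "'a \<Rightarrow> nat"
  assumes ps: "prob_space M"
    and Nm: "N \<in> measurable M (count_space UNIV)"
    and dist: "\<And>k. measure M {\<omega> \<in> space M. N \<omega> = k} = \<mu> ^ k / fact k * exp (- \<mu>)"
    and c: "0 \<le> c"
  shows "prob_space.expectation M (\<lambda>\<omega>. exp (- (c * real (N \<omega>)))) = exp (- ((1 - exp (- c)) * \<mu>))"
proof -
  interpret prob_space M by (rule ps)
  define f where "f k \<omega> = exp (- (c * real k)) * indicator {\<omega> \<in> space M. N \<omega> = k} \<omega>" for k \<omega>
  have setm: "{\<omega> \<in> space M. N \<omega> = k} \<in> sets M" for k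
    using Nm by measurable
  have int: "integrable M (f k)" for k
    unfolding f_def using setm by (intro integrable_real_mult_indicator) auto
  have pt: "(\<lambda>k. f k \<omega>) sums exp (- (c * real (N \<omega>)))" if "\<omega> \<in> space M" for \<omega>
  proof -
    have "(\<lambda>k. f k \<omega>) = (\<lambda>k. if k = N \<omega> then exp (- (c * real k)) else 0)"
      using that by (auto simp: f_def indicator_def)
    then show ?thesis using sums_single[of "N \<omega>" "\<lambda>k. exp (- (c * real k))"] by simp
  qed
  have intf: "integral\<^sup>L M (f k) = exp (- \<mu>) * ((\<mu> * exp (- c)) ^ k / fact k)" for k
  proof -
    have "integral\<^sup>L M (f k) = exp (- (c * real k)) * measure M {\<omega> \<in> space M. N \<omega> = k}"
      unfolding f_def using setm by simp
    also have "\<dots> = exp (- \<mu>) * ((\<mu> * exp (- c)) ^ k / fact k)"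
      by (simp add: dist power_mult_distrib exp_of_nat_mult[symmetric] mult_ac)
    finally show ?thesis .
  qed
  have s1: "(\<lambda>k. integral\<^sup>L M (f k)) sums (exp (- \<mu>) * exp (\<mu> * exp (- c)))"
    unfolding intf using exp_converges[of "\<mu> * exp (- c)"]
    by (intro sums_mult) (simp add: divide_inverse mult_ac)
  have nn: "\<bar>f k \<omega>\<bar> = f k \<omega>" for k \<omega> by (simp add: f_def)
  have s2: "(\<lambda>k. f k \<omega>) sums (\<Sum>k. f k \<omega>)" if "\<omega> \<in> space M" for \<omega>
    using pt[OF that] by (simp add: sums_iff)
  have "(\<lambda>k. integral\<^sup>L M (f k)) sums (\<integral>\<omega>. (\<Sum>k. f k \<omega>) \<partial>M)"
  proof (rule sums_integral)
    show "AE x in M. summable (\<lambda>i. norm (f i x))"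
      using pt by (auto simp: nn sums_iff)
    show "summable (\<lambda>i. \<integral>x. norm (f i x) \<partial>M)"
      using s1 by (simp add: nn sums_iff)
  qed (rule int)
  moreover have "(\<integral>\<omega>. (\<Sum>k. f k \<omega>) \<partial>M) = (\<integral>\<omega>. exp (- (c * real (N \<omega>))) \<partial>M)"
    by (rule Bochner_Integration.integral_cong[OF refl]) (use pt in \<open>simp add: sums_iff\<close>)
  ultimately have "(\<integral>\<omega>. exp (- (c * real (N \<omega>))) \<partial>M) = exp (- \<mu>) * exp (\<mu> * exp (- c))"
    using s1 sums_unique2 by metis
  also have "\<dots> = exp (- ((1 - exp (- c)) * \<mu>))"
    by (simp add: exp_add[symmetric] algebra_simps)
  finally show ?thesis .
qed

abbreviation "bint lam Bs W \<equiv> batch_intensity lam Bs W"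

lemma pp_prob: "batch_poisson_process M Pts lam Bs W \<Longrightarrow> prob_space M"
  by (simp add: batch_poisson_process_def)

lemma pp_D:
  fixes n :: nat and A :: "nat \<Rightarrow> (real \<times> mark) set"
  assumes proc: "batch_poisson_process M Pts lam Bs W"
    and pre1: "\<forall>i<n. A i \<in> sets point_space \<and> bint lam Bs W (A i) < \<infinity>"
    and pre2: "\<forall>i<n. \<forall>j<n. i \<noteq> j \<longrightarrow> A i \<inter> A j = {}"
  shows "(\<forall>i<n. (AE \<omega> in M. finite (Pts \<omega> \<inter> A i)) \<and>
                 (\<lambda>\<omega>. card (Pts \<omega> \<inter> A i)) \<in> measurable M (count_space UNIV) \<and>
                 (\<forall>k::nat. measure M {\<omega> \<in> space M. card (Pts \<omega> \<inter> A i) = k} =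
                    enn2real (bint lam Bs W (A i)) ^ k / fact k
                      * exp (- enn2real (bint lam Bs W (A i))))) \<and>
          prob_space.indep_vars M (\<lambda>_. count_space UNIV) (\<lambda>i \<omega>. card (Pts \<omega> \<inter> A i)) {..<n}"
  using proc unfolding batch_poisson_process_def
  apply (elim conjE)
  apply (drule spec[of _ n])
  apply (drule spec[of _ A])
  using pre1 pre2 by blast

lemma pp_single:
  assumes proc: "batch_poisson_process M Pts lam Bs W"
    and A: "A \<in> sets point_space" "bint lam Bs W A < \<infinity>"
  shows "AE \<omega> in M. finite (Pts \<omega> \<inter> A)"
    and "(\<lambda>\<omega>. card (Pts \<omega> \<inter> A)) \<in> measurable M (count_space UNIV)"
    and "\<And>k. measure M {\<omega> \<in> space M. card (Pts \<omega> \<inter> A) = k} =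
                    enn2real (bint lam Bs W A) ^ k / fact k * exp (- enn2real (bint lam Bs W A))"
proof -
  have "\<forall>i<(1::nat). (\<lambda>_. A) i \<in> sets point_space \<and> bint lam Bs W ((\<lambda>_. A) i) < \<infinity>"
      "\<forall>i<(1::nat). \<forall>j<1. i \<noteq> j \<longrightarrow> (\<lambda>_. A) i \<inter> (\<lambda>_. A) j = {}"
    using A by simp_all
  from pp_D[OF proc this] have H: "(AE \<omega> in M. finite (Pts \<omega> \<inter> A)) \<and>
                 (\<lambda>\<omega>. card (Pts \<omega> \<inter> A)) \<in> measurable M (count_space UNIV) \<and>
                 (\<forall>k::nat. measure M {\<omega> \<in> space M. card (Pts \<omega> \<inter> A) = k} =
                    enn2real (bint lam Bs W A) ^ k / fact k
                      * exp (- enn2real (bint lam Bs W A)))"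
    by (elim conjE allE[of _ 0]) simp
  then show "AE \<omega> in M. finite (Pts \<omega> \<inter> A)"
    and "(\<lambda>\<omega>. card (Pts \<omega> \<inter> A)) \<in> measurable M (count_space UNIV)"
    and "\<And>k. measure M {\<omega> \<in> space M. card (Pts \<omega> \<inter> A) = k} =
                    enn2real (bint lam Bs W A) ^ k / fact k * exp (- enn2real (bint lam Bs W A))"
    by simp_all
qed

lemma pp_laplace_finite:
  assumes proc: "batch_poisson_process M Pts lam Bs W"
    and J: "finite J"
    and C: "\<And>j. j \<in> J \<Longrightarrow> C j \<in> sets point_space" "\<And>j. j \<in> J \<Longrightarrow> bint lam Bs W (C j) < \<infinity>"
    and disj: "\<And>i j. i \<in> J \<Longrightarrow> j \<in> J \<Longrightarrow> i \<noteq> j \<Longrightarrow> C i \<inter> C j = {}"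
    and c: "\<And>j. j \<in> J \<Longrightarrow> 0 \<le> c j"
  shows "prob_space.expectation M (\<lambda>\<omega>. exp (- (\<Sum>j\<in>J. c j * real (card (Pts \<omega> \<inter> C j)))))
       = exp (- (\<Sum>j\<in>J. (1 - exp (- c j)) * enn2real (bint lam Bs W (C j))))"
proof -
  interpret prob_space M using proc by (rule pp_prob)
  obtain h where h: "bij_betw h {0..<card J} J" using ex_bij_betw_nat_finite[OF J] by blast
  define n where "n = card J"
  define A where "A i = C (h i)" for i
  have hJ: "i < n \<Longrightarrow> h i \<in> J" for i using h bij_betwE n_def by fastforce
  have hinj: "i < n \<Longrightarrow> j < n \<Longrightarrow> h i = h j \<Longrightarrow> i = j" for i j
    using h unfolding bij_betw_def inj_on_def n_def by auto
  have pre: "(\<forall>i<n. A i \<in> sets point_space \<and> bint lam Bs W (A i) < \<infinity>) \<and>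
        (\<forall>i<n. \<forall>j<n. i \<noteq> j \<longrightarrow> A i \<inter> A j = {})"
  proof (intro conjI allI impI)
    fix i assume "i < n" then show "A i \<in> sets point_space" "bint lam Bs W (A i) < \<infinity>"
      unfolding A_def using C hJ by auto
  next
    fix i j assume "i < n" "j < n" "i \<noteq> j"
    then show "A i \<inter> A j = {}" unfolding A_def using disj hJ hinj by metis
  qed
  have indep: "indep_vars (\<lambda>_. count_space UNIV) (\<lambda>i \<omega>. card (Pts \<omega> \<inter> A i)) {..<n}"
    using pp_D[OF proc, of n A] pre by blast
  have indep2: "indep_vars (\<lambda>_. borel) (\<lambda>i \<omega>. exp (- (c (h i) * real (card (Pts \<omega> \<inter> A i))))) {..<n}"
    by (rule indep_vars_compose2[OF indep]) simp
  have meas: "(\<lambda>\<omega>. card (Pts \<omega> \<inter> A i)) \<in> measurable M (count_space UNIV)" if "i < n" for i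
    using pp_single(2)[OF proc] pre that by blast
  have integ: "integrable M (\<lambda>\<omega>. exp (- (c (h i) * real (card (Pts \<omega> \<inter> A i)))))" if "i \<in> {..<n}" for i
  proof (rule integrable_const_bound[where B=1])
    show "AE x in M. norm (exp (- (c (h i) * real (card (Pts x \<inter> A i))))) \<le> 1"
      using c[OF hJ] that by auto
    have "(\<lambda>x. card (Pts x \<inter> A i)) \<in> measurable M (count_space UNIV)" using meas that by auto
    then show "(\<lambda>x. exp (- (c (h i) * real (card (Pts x \<inter> A i))))) \<in> borel_measurable M"
      by measurable
  qed
  have single: "expectation (\<lambda>\<omega>. exp (- (c (h i) * real (card (Pts \<omega> \<inter> A i)))))
      = exp (- ((1 - exp (- c (h i))) * enn2real (bint lam Bs W (A i))))" if "i < n" for i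
    using pp_single[OF proc] pre that c[OF hJ[OF that]]
    by (intro poisson_laplace_single[OF prob_space_axioms]) auto
  have "expectation (\<lambda>\<omega>. exp (- (\<Sum>j\<in>J. c j * real (card (Pts \<omega> \<inter> C j)))))
      = expectation (\<lambda>\<omega>. \<Prod>i\<in>{..<n}. exp (- (c (h i) * real (card (Pts \<omega> \<inter> A i)))))"
  proof (rule Bochner_Integration.integral_cong[OF refl])
    fix \<omega>
    have "(\<Sum>j\<in>J. c j * real (card (Pts \<omega> \<inter> C j))) = (\<Sum>i\<in>{..<n}. c (h i) * real (card (Pts \<omega> \<inter> A i)))"
      using sum.reindex_bij_betw[OF h, of "\<lambda>j. c j * real (card (Pts \<omega> \<inter> C j))"]
      by (simp add: A_def n_def lessThan_atLeast0)
    then show "exp (- (\<Sum>j\<in>J. c j * real (card (Pts \<omega> \<inter> C j)))) =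
        (\<Prod>i\<in>{..<n}. exp (- (c (h i) * real (card (Pts \<omega> \<inter> A i)))))"
      by (simp add: exp_sum[symmetric] sum_negf)
  qed
  also have "\<dots> = (\<Prod>i\<in>{..<n}. expectation (\<lambda>\<omega>. exp (- (c (h i) * real (card (Pts \<omega> \<inter> A i))))))"
    by (rule indep_vars_lebesgue_integral[OF _ indep2 integ]) auto
  also have "\<dots> = (\<Prod>i\<in>{..<n}. exp (- ((1 - exp (- c (h i))) * enn2real (bint lam Bs W (A i)))))"
    using single by (intro prod.cong) auto
  also have "\<dots> = exp (- (\<Sum>i\<in>{..<n}. (1 - exp (- c (h i))) * enn2real (bint lam Bs W (A i))))"
    by (simp add: exp_sum[symmetric] sum_negf)
  also have "(\<Sum>i\<in>{..<n}. (1 - exp (- c (h i))) * enn2real (bint lam Bs W (A i)))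
      = (\<Sum>j\<in>J. (1 - exp (- c j)) * enn2real (bint lam Bs W (C j)))"
    using sum.reindex_bij_betw[OF h, of "\<lambda>j. (1 - exp (- c j)) * enn2real (bint lam Bs W (C j))"]
    by (simp add: A_def n_def lessThan_atLeast0)
  finally show ?thesis .
qed

lemma space_point_space: "space point_space = UNIV"
  by (simp add: point_space_def space_pair_measure space_PiM PiE_UNIV_domain)

lemma sets_point_space: "sets point_space = sets (borel \<Otimes>\<^sub>M (count_space UNIV \<Otimes>\<^sub>M PiM UNIV (\<lambda>_::nat. borel)))"
  by (simp add: point_space_def)

lemma sets_mark_law:
  assumes "\<And>s. sets (W s) = sets borel"
  shows "sets (mark_law Bs W s) = sets (count_space UNIV \<Otimes>\<^sub>M PiM UNIV (\<lambda>_::nat. borel))"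
  unfolding mark_law_def
  by (intro sets_pair_measure_cong sets_PiM_cong) (auto simp: assms)

lemma section_sets:
  assumes "\<And>s. sets (W s) = sets borel" "A \<in> sets point_space"
  shows "Pair s -` A \<in> sets (mark_law Bs W s)"
  unfolding sets_mark_law[OF assms(1)]
  using assms(2) unfolding point_space_def by (rule sets_Pair1)

lemma bint_mono:
  assumes "\<And>s. sets (W s) = sets borel" "B \<in> sets point_space" "A \<subseteq> B"
  shows "bint lam Bs W A \<le> bint lam Bs W B"
  unfolding batch_intensity_def
proof (intro nn_integral_mono mult_left_mono)
  fix s show "emeasure (mark_law Bs W s) (Pair s -` A) \<le> emeasure (mark_law Bs W s) (Pair s -` B)"
    using assms section_sets[OF assms(1,2)] by (intro emeasure_mono) auto
qed auto

lemma real_sum_cells: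
  fixes g :: "'p \<Rightarrow> nat"
  shows "real (\<Sum>p\<in>P \<inter> A. g p) =
    (if card (P \<inter> A) = 0 then 0 else (\<Sum>n. real n * real (card (P \<inter> (A \<inter> {p. g p = n})))))"
proof (cases "finite (P \<inter> A) \<and> P \<inter> A \<noteq> {}")
  case False
  then show ?thesis by auto
next
  case True
  then have F: "finite (P \<inter> A)" and ne: "card (P \<inter> A) \<noteq> 0" by auto
  have "(\<Sum>p\<in>P \<inter> A. g p) = (\<Sum>n\<in>g ` (P \<inter> A). \<Sum>p\<in>{x \<in> P \<inter> A. g x = n}. g p)"
    using sum.image_gen[OF F, of g g] .
  also have "\<dots> = (\<Sum>n\<in>g ` (P \<inter> A). n * card (P \<inter> (A \<inter> {p. g p = n})))"
  proof (intro sum.cong refl)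
    fix n assume "n \<in> g ` (P \<inter> A)"
    have e: "{x \<in> P \<inter> A. g x = n} = P \<inter> (A \<inter> {p. g p = n})" by auto
    have "(\<Sum>p\<in>P \<inter> (A \<inter> {p. g p = n}). g p) = (\<Sum>p\<in>P \<inter> (A \<inter> {p. g p = n}). n)"
      by (intro sum.cong) auto
    then show "(\<Sum>p\<in>{x \<in> P \<inter> A. g x = n}. g p) = n * card (P \<inter> (A \<inter> {p. g p = n}))"
      unfolding e by simp
  qed
  finally have "real (\<Sum>p\<in>P \<inter> A. g p) = (\<Sum>n\<in>g ` (P \<inter> A). real n * real (card (P \<inter> (A \<inter> {p. g p = n}))))"
    by simp
  also have "\<dots> = (\<Sum>n. real n * real (card (P \<inter> (A \<inter> {p. g p = n}))))"
  proof (rule suminf_finite[symmetric])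
    show "finite (g ` (P \<inter> A))" using F by simp
    fix n assume "n \<notin> g ` (P \<inter> A)"
    then have "P \<inter> (A \<inter> {p. g p = n}) = {}" by auto
    then show "real n * real (card (P \<inter> (A \<inter> {p. g p = n}))) = 0" by simp
  qed
  finally show ?thesis using ne by simp
qed

lemma sum_meas:
  fixes g :: "real \<times> mark \<Rightarrow> nat"
  assumes proc: "batch_poisson_process M Pts lam Bs W"
    and Ws: "\<And>s. sets (W s) = sets borel"
    and A: "A \<in> sets point_space" "bint lam Bs W A < \<infinity>"
    and g: "g \<in> measurable point_space (count_space UNIV)"
  shows "(\<lambda>\<omega>. real (\<Sum>p\<in>Pts \<omega> \<inter> A. g p)) \<in> borel_measurable M"
proof -
  have Bs: "A \<inter> {p. g p = n} \<in> sets point_space" for n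
  proof -
    have "A \<inter> {p. g p = n} = A \<inter> (g -` {n} \<inter> space point_space)"
      by (auto simp: space_point_space)
    also have "\<dots> \<in> sets point_space"
      by (rule sets.Int[OF A(1) measurable_sets[OF g]]) simp
    finally show ?thesis .
  qed
  have Bf: "bint lam Bs W (A \<inter> {p. g p = n}) < \<infinity>" for n
    by (rule le_less_trans[OF bint_mono[where W=W and lam=lam and Bs=Bs, OF Ws A(1)] A(2)]) auto
  have [measurable]: "(\<lambda>\<omega>. card (Pts \<omega> \<inter> (A \<inter> {p. g p = n}))) \<in> measurable M (count_space UNIV)" for n
    using pp_single(2)[OF proc Bs Bf] .
  have [measurable]: "(\<lambda>\<omega>. card (Pts \<omega> \<inter> A)) \<in> measurable M (count_space UNIV)"
    using pp_single(2)[OF proc A] .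
  have S: "(\<lambda>\<omega>. \<Sum>n. real n * real (card (Pts \<omega> \<inter> (A \<inter> {p. g p = n})))) \<in> borel_measurable M"
    by (rule borel_measurable_suminf) measurable
  have Pm: "{\<omega> \<in> space M. card (Pts \<omega> \<inter> A) = 0} \<in> sets M" by measurable
  show ?thesis
    unfolding real_sum_cells by (intro measurable_If S Pm) simp
qed

lemma point_comp_meas[measurable]:
  "(\<lambda>p::real \<times> mark. fst p) \<in> borel_measurable point_space"
  "(\<lambda>p::real \<times> mark. snd (snd p) i) \<in> borel_measurable point_space"
  "(\<lambda>p::real \<times> mark. fst (snd p)) \<in> measurable point_space (count_space UNIV)"
  unfolding point_space_def by measurable

lemma nat_indicator_meas:
  assumes "{p \<in> space N. P p} \<in> sets N"
  shows "(\<lambda>p. if P p then 1 else 0::nat) \<in> measurable N (count_space UNIV)"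
  using assms by (intro measurable_If) auto

definition cntQ :: "real \<Rightarrow> real \<times> mark \<Rightarrow> nat" where
  "cntQ t p = (\<Sum>i<fst (snd p). if t < fst p + snd (snd p) i then 1 else 0)"

definition cntD :: "real \<Rightarrow> real \<times> mark \<Rightarrow> nat" where
  "cntD t p = (\<Sum>i<fst (snd p). if 0 < fst p + snd (snd p) i \<and> fst p + snd (snd p) i \<le> t then 1 else 0)"

lemma card_filter_lessThan: "card {i. i < (b::nat) \<and> P i} = (\<Sum>i<b. if P i then 1 else 0)"
proof -
  have "(\<Sum>i<b. if P i then 1 else 0::nat) = (\<Sum>i\<in>{..<b} \<inter> {x. P x}. 1) + (\<Sum>i\<in>{..<b} \<inter> - {x. P x}. 0)"
    by (rule sum.If_cases) simp
  also have "\<dots> = card ({..<b} \<inter> {x. P x})" by simp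
  also have "{..<b} \<inter> {x. P x} = {i. i < b \<and> P i}" by auto
  finally show ?thesis by simp
qed

lemma queue_Q_eq: "queue_Q P t = (\<Sum>p\<in>P \<inter> {p. fst p \<le> t}. cntQ t p)"
  unfolding queue_Q_def cntQ_def
proof (rule sum.cong)
  show "{p \<in> P. fst p \<le> t} = P \<inter> {p. fst p \<le> t}" by blast
  fix p :: "real \<times> mark" obtain s b w where p: "p = (s, b, w)" by (cases p) auto
  show "(case p of (s, b, w) \<Rightarrow> card {i. i < b \<and> t < s + w i}) =
     (\<Sum>i<fst (snd p). if t < fst p + snd (snd p) i then 1 else 0)"
    unfolding p by (simp add: card_filter_lessThan)
qed

lemma queue_D_eq: "queue_D P t = (\<Sum>p\<in>P \<inter> {p. fst p \<le> t}. cntD t p)"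
  unfolding queue_D_def cntD_def
proof (rule sum.cong)
  show "{p \<in> P. fst p \<le> t} = P \<inter> {p. fst p \<le> t}" by blast
  fix p :: "real \<times> mark" obtain s b w where p: "p = (s, b, w)" by (cases p) auto
  show "(case p of (s, b, w) \<Rightarrow> card {i. i < b \<and> 0 < s + w i \<and> s + w i \<le> t}) =
     (\<Sum>i<fst (snd p). if 0 < fst p + snd (snd p) i \<and> fst p + snd (snd p) i \<le> t then 1 else 0)"
    unfolding p by (simp add: card_filter_lessThan)
qed

lemma cntQ_meas: "cntQ t \<in> measurable point_space (count_space UNIV)"
proof -
  have 1: "(\<lambda>p. \<Sum>i<b. if t < fst p + snd (snd p) i then 1 else 0::nat) \<in> measurable point_space (count_space UNIV)" for b
  proof (rule measurable_sum_nat)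
    fix i
    have "(\<lambda>p. fst p + snd (snd p) i) \<in> borel_measurable point_space" by measurable
    then have "{p \<in> space point_space. t < fst p + snd (snd p) i} \<in> sets point_space" by measurable
    then show "(\<lambda>p. if t < fst p + snd (snd p) i then 1 else 0::nat) \<in> measurable point_space (count_space UNIV)"
      by (rule nat_indicator_meas)
  qed
  have 2: "(\<lambda>p. fst (snd p)) \<in> measurable point_space (count_space UNIV)"
    by measurable
  show ?thesis
    using measurable_compose_countable[where f="\<lambda>b p. \<Sum>i<b. if t < fst p + snd (snd p) i then 1 else 0::nat", OF 1 2]
    unfolding cntQ_def by simp
qed

lemma cntD_meas: "cntD t \<in> measurable point_space (count_space UNIV)"
proof -
  have 1: "(\<lambda>p. \<Sum>i<b. if 0 < fst p + snd (snd p) i \<and> fst p + snd (snd p) i \<le> t then 1 else 0::nat) \<in> measurable point_space (count_space UNIV)" for b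
  proof (rule measurable_sum_nat)
    fix i
    have "(\<lambda>p. fst p + snd (snd p) i) \<in> borel_measurable point_space" by measurable
    then have "{p \<in> space point_space. 0 < fst p + snd (snd p) i \<and> fst p + snd (snd p) i \<le> t} \<in> sets point_space" by measurable
    then show "(\<lambda>p. if 0 < fst p + snd (snd p) i \<and> fst p + snd (snd p) i \<le> t then 1 else 0::nat) \<in> measurable point_space (count_space UNIV)"
      by (rule nat_indicator_meas)
  qed
  have 2: "(\<lambda>p. fst (snd p)) \<in> measurable point_space (count_space UNIV)"
    by measurable
  show ?thesis
    using measurable_compose_countable[where f="\<lambda>b p. \<Sum>i<b. if 0 < fst p + snd (snd p) i \<and> fst p + snd (snd p) i \<le> t then 1 else 0::nat", OF 1 2]
    unfolding cntD_def by simp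
qed

locale qs =
  fixes M :: "'a measure" and Pts :: "'a \<Rightarrow> (real \<times> mark) set"
    and lam :: "real \<Rightarrow> real" and Bs :: "real \<Rightarrow> nat pmf" and W :: "real \<Rightarrow> real measure"
    and m :: nat and t :: "nat \<Rightarrow> real" and \<alpha> \<beta> :: "nat \<Rightarrow> real"
  assumes lam_nonneg: "\<And>s. 0 \<le> lam s"
    and lam_meas: "lam \<in> borel_measurable borel"
    and lam_loc_int: "\<And>T. set_integrable lborel {0..T} lam"
    and B_pos: "\<And>s. 0 \<notin> set_pmf (Bs s)"
    and B_meas: "\<And>b. (\<lambda>s. pmf (Bs s) b) \<in> borel_measurable borel"
    and W_prob: "\<And>s. prob_space (W s)"
    and W_sets: "\<And>s. sets (W s) = sets borel"
    and W_nonneg: "\<And>s. emeasure (W s) {..<0} = 0"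
    and W_meas: "W \<in> measurable borel (subprob_algebra borel)"
    and proc: "batch_poisson_process M Pts lam Bs W"
    and t0: "t 0 = 0"
    and t_mono: "\<And>k. k < m \<Longrightarrow> t k < t (Suc k)"
    and \<alpha>_nonneg: "\<And>k. k \<in> {1..m} \<Longrightarrow> 0 \<le> \<alpha> k"
    and \<beta>_nonneg: "\<And>k. k \<in> {1..m} \<Longrightarrow> 0 \<le> \<beta> k"
begin

lemma t_le: "i \<le> j \<Longrightarrow> j \<le> m \<Longrightarrow> t i \<le> t j"
proof (induction j)
  case 0 then show ?case by simp
next
  case (Suc j)
  show ?case
  proof (cases "i = Suc j")
    case False
    then have "i \<le> j" using Suc by simp
    then have "t i \<le> t j" using Suc by simp
    also have "t j < t (Suc j)" using t_mono Suc by simp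
    finally show ?thesis by simp
  qed simp
qed

lemma t_less: "i < j \<Longrightarrow> j \<le> m \<Longrightarrow> t i < t j"
proof -
  assume a: "i < j" "j \<le> m"
  then have "t i < t (Suc i)" using t_mono by simp
  also have "t (Suc i) \<le> t j" using a by (intro t_le) auto
  finally show ?thesis .
qed

lemma t_nonneg: "i \<le> m \<Longrightarrow> 0 \<le> t i"
  using t_le[of 0 i] t0 by simp

lemma t_find: "a < b \<Longrightarrow> b \<le> m \<Longrightarrow> t a < d \<Longrightarrow> d \<le> t b \<Longrightarrow> \<exists>l. a < l \<and> l \<le> b \<and> t (l - 1) < d \<and> d \<le> t l"
proof (induction b)
  case 0 then show ?case by simp
next
  case (Suc b)
  show ?case
  proof (cases "d \<le> t b \<and> a < b")
    case True
    then obtain l where "a < l \<and> l \<le> b \<and> t (l - 1) < d \<and> d \<le> t l" using Suc by auto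
    then show ?thesis by (intro exI[of _ l]) auto
  next
    case False
    then have "t b < d" using Suc by (cases "a < b") (auto simp: less_Suc_eq)
    then show ?thesis using Suc by (intro exI[of _ "Suc b"]) auto
  qed
qed

lemma space_W: "space (W s) = UNIV"
  using sets_eq_imp_space_eq[OF W_sets[of s]] by simp

lemma prob_mark: "prob_space (mark_law Bs W s)"
  unfolding mark_law_def
  by (intro prob_space_pair prob_space_PiM W_prob prob_space_measure_pmf)

lemma space_mark: "space (mark_law Bs W s) = UNIV"
  unfolding mark_law_def by (simp add: space_pair_measure space_PiM space_W PiE_UNIV_domain)

lemma emeasure_mark_rect:
  assumes X: "\<And>i. i < b \<Longrightarrow> X i \<in> sets borel"
  shows "emeasure (mark_law Bs W s) ({b} \<times> {w. \<forall>i<b. w i \<in> X i})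
       = ennreal (pmf (Bs s) b) * (\<Prod>i<b. emeasure (W s) (X i))"
proof -
  interpret P: product_prob_space "\<lambda>_. W s" UNIV
    using W_prob by (rule product_prob_spaceI)
  have S: "{w. \<forall>i<b. w i \<in> X i} = prod_emb UNIV (\<lambda>_. W s) {..<b} (PiE {..<b} X)"
    by (simp add: prod_emb_def space_W restrict_PiE_iff Pi_iff set_eq_iff) blast
  have XS: "\<And>i. i \<in> {..<b} \<Longrightarrow> X i \<in> sets (W s)" using X W_sets by auto
  have Sm: "{w. \<forall>i<b. w i \<in> X i} \<in> sets (PiM UNIV (\<lambda>_. W s))"
    unfolding S using XS by (intro sets_PiM_I) auto
  have "emeasure (mark_law Bs W s) ({b} \<times> {w. \<forall>i<b. w i \<in> X i})
      = emeasure (measure_pmf (Bs s)) {b} * emeasure (PiM UNIV (\<lambda>_. W s)) {w. \<forall>i<b. w i \<in> X i}"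
    unfolding mark_law_def using Sm by (intro P.emeasure_pair_measure_Times) simp_all
  also have "emeasure (PiM UNIV (\<lambda>_. W s)) {w. \<forall>i<b. w i \<in> X i} = (\<Prod>i<b. emeasure (W s) (X i))"
    unfolding S by (rule emeasure_PiM_emb) (simp_all add: W_prob XS)
  finally show ?thesis by (simp only: emeasure_pmf_single)
qed

end

context qs begin

lemma bint_rect:
  assumes X: "\<And>i s. i < b \<Longrightarrow> X i s \<in> sets borel"
  shows "bint lam Bs W {p. fst p \<in> I \<and> fst (snd p) = b \<and> (\<forall>i<b. snd (snd p) i \<in> X i (fst p))}
   = (\<integral>\<^sup>+ s. indicator {0..} s * ennreal (lam s) * (indicator I s * (ennreal (pmf (Bs s) b) * (\<Prod>i<b. emeasure (W s) (X i s)))) \<partial>lborel)"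
  unfolding batch_intensity_def
proof (intro nn_integral_cong arg_cong2[where f="(*)"] refl)
  fix s
  have "Pair s -` {p. fst p \<in> I \<and> fst (snd p) = b \<and> (\<forall>i<b. snd (snd p) i \<in> X i (fst p))}
      = (if s \<in> I then {b} \<times> {w. \<forall>i<b. w i \<in> X i s} else {})"
    by auto
  then show "emeasure (mark_law Bs W s) (Pair s -` {p. fst p \<in> I \<and> fst (snd p) = b \<and> (\<forall>i<b. snd (snd p) i \<in> X i (fst p))})
      = indicator I s * (ennreal (pmf (Bs s) b) * (\<Prod>i<b. emeasure (W s) (X i s)))"
    using emeasure_mark_rect[of b "\<lambda>i. X i s" s] X by (simp add: indicator_def)
qed

definition E :: "nat \<Rightarrow> nat \<Rightarrow> real \<Rightarrow> real set" where
  "E k l s = {w. 0 \<le> w \<and> (l \<noteq> k \<longrightarrow> t (l - 1) < s + w) \<and> (l \<le> m \<longrightarrow> s + w \<le> t l)}"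

definition cell :: "nat \<Rightarrow> nat \<Rightarrow> (nat \<Rightarrow> nat) \<Rightarrow> (real \<times> mark) set" where
  "cell k b r = {p. fst p \<in> {t (k - 1)<..t k} \<and> fst (snd p) = b \<and> (\<forall>i<b. snd (snd p) i \<in> E k (r i) (fst p))}"

definition pE :: "nat \<Rightarrow> nat \<Rightarrow> real \<Rightarrow> real" where
  "pE k l s = measure (W s) (E k l s)"

definition G :: "nat \<Rightarrow> nat \<Rightarrow> (nat \<Rightarrow> nat) \<Rightarrow> real \<Rightarrow> real" where
  "G k b r s = indicator {t (k - 1)<..t k} s * lam s * pmf (Bs s) b * (\<Prod>i<b. pE k (r i) s)"

lemma E_sets: "E k l s \<in> sets borel"
proof -
  have "E k l s = {w \<in> space borel. 0 \<le> w \<and> (l \<noteq> k \<longrightarrow> t (l - 1) < s + w) \<and> (l \<le> m \<longrightarrow> s + w \<le> t l)}"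
    by (simp add: E_def)
  also have "\<dots> \<in> sets borel" by measurable
  finally show ?thesis .
qed

lemma E_sigma: "(SIGMA s:space borel. E k l s) \<in> sets (borel \<Otimes>\<^sub>M borel)"
proof -
  have "(SIGMA s:space borel. E k l s) = {x \<in> space (borel \<Otimes>\<^sub>M borel). 0 \<le> snd x \<and> (l \<noteq> k \<longrightarrow> t (l - 1) < fst x + snd x) \<and> (l \<le> m \<longrightarrow> fst x + snd x \<le> t l)}"
    by (auto simp: E_def space_pair_measure)
  also have "\<dots> \<in> sets (borel \<Otimes>\<^sub>M borel)" by measurable
  finally show ?thesis .
qed

lemma pE_meas[measurable]: "pE k l \<in> borel_measurable borel"
  unfolding pE_def by (rule measure_measurable_subprob_algebra2[OF E_sigma W_meas])

lemma pE_nonneg: "0 \<le> pE k l s" by (simp add: pE_def)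
lemma pE_le1: "pE k l s \<le> 1"
  unfolding pE_def using W_prob by (simp add: prob_space.prob_le_1)

lemma G_meas[measurable]: "G k b r \<in> borel_measurable borel"
  unfolding G_def using lam_meas B_meas by measurable

lemma G_nonneg: "0 \<le> G k b r s"
  unfolding G_def using lam_nonneg pE_nonneg by (auto intro!: mult_nonneg_nonneg prod_nonneg)

lemma G_le: "G k b r s \<le> indicator {t (k - 1)<..t k} s * lam s"
proof -
  have "pmf (Bs s) b * (\<Prod>i<b. pE k (r i) s) \<le> 1 * 1"
    using pE_nonneg pE_le1 by (intro mult_mono pmf_le_1 prod_le_1 prod_nonneg) auto
  then show ?thesis unfolding G_def using lam_nonneg
    by (auto simp: indicator_def mult.assoc intro: mult_left_le)
qed

lemma lam_ind_integrable: "k \<le> m \<Longrightarrow> integrable lborel (\<lambda>s. indicator {t (k - 1)<..t k} s * lam s)"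
proof -
  assume k: "k \<le> m"
  have "integrable lborel (\<lambda>s. indicator {0..t k} s *\<^sub>R lam s)"
    using lam_loc_int[of "t k"] by (simp add: set_integrable_def)
  then show ?thesis
  proof (rule Bochner_Integration.integrable_bound)
    show "(\<lambda>s. indicator {t (k - 1)<..t k} s * lam s) \<in> borel_measurable lborel"
      using lam_meas by measurable
    have "0 \<le> t (k - 1)" using k by (intro t_nonneg) auto
    then show "AE x in lborel. norm (indicator {t (k - 1)<..t k} x * lam x) \<le> norm (indicator {0..t k} x *\<^sub>R lam x)"
      using lam_nonneg by (auto simp: indicator_def)
  qed
qed

lemma G_integrable: "k \<le> m \<Longrightarrow> integrable lborel (G k b r)"
  by (rule Bochner_Integration.integrable_bound[OF lam_ind_integrable])
     (use G_nonneg G_le lam_nonneg in \<open>auto\<close>)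

lemma bint_cell:
  assumes k: "1 \<le> k" "k \<le> m"
  shows "bint lam Bs W (cell k b r) = ennreal (integral\<^sup>L lborel (G k b r))"
proof -
  have t0k: "0 \<le> t (k - 1)" using k by (intro t_nonneg) auto
  have "bint lam Bs W (cell k b r) = (\<integral>\<^sup>+ s. indicator {0..} s * ennreal (lam s) * (indicator {t (k - 1)<..t k} s * (ennreal (pmf (Bs s) b) * (\<Prod>i<b. emeasure (W s) (E k (r i) s)))) \<partial>lborel)"
    unfolding cell_def by (rule bint_rect) (rule E_sets)
  also have "\<dots> = (\<integral>\<^sup>+ s. ennreal (G k b r s) \<partial>lborel)"
  proof (intro nn_integral_cong)
    fix s
    have em: "emeasure (W s) (E k l s) = ennreal (pE k l s)" for l
      unfolding pE_def using W_prob[of s] by (intro emeasure_eq_ennreal_measure) (simp add: prob_space_def finite_measure.emeasure_finite)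
    have pr: "(\<Prod>i<b. emeasure (W s) (E k (r i) s)) = ennreal (\<Prod>i<b. pE k (r i) s)"
      unfolding em using pE_nonneg by (simp add: prod_ennreal)
    show "indicator {0..} s * ennreal (lam s) * (indicator {t (k - 1)<..t k} s * (ennreal (pmf (Bs s) b) * (\<Prod>i<b. emeasure (W s) (E k (r i) s)))) = ennreal (G k b r s)"
      unfolding pr G_def using t0k lam_nonneg pE_nonneg
      by (auto simp: indicator_def ennreal_mult[symmetric] prod_nonneg mult.assoc)
  qed
  also have "\<dots> = ennreal (integral\<^sup>L lborel (G k b r))"
    using G_integrable[OF k(2)] G_nonneg by (intro nn_integral_eq_integral) auto
  finally show ?thesis .
qed

end

lemma telescope_F:
  fixes F :: "nat \<Rightarrow> real"
  shows "k \<le> n \<Longrightarrow> (\<Sum>l=Suc k..n. F l - F (l - 1)) = F n - F k"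
proof (induction n rule: dec_induct)
  case base then show ?case by simp
next
  case (step n) then show ?case by simp
qed

lemma bracket_alg:
  fixes F e :: "nat \<Rightarrow> real"
  assumes "k \<le> m"
  shows "F k + (\<Sum>l=Suc k..m. e l * (F l - F (l - 1))) + e (Suc m) * (1 - F m)
       = 1 - (\<Sum>l=Suc k..m. (1 - e l) * (F l - F (l - 1))) - (1 - e (Suc m)) * (1 - F m)"
proof -
  have "(\<Sum>l=Suc k..m. (1 - e l) * (F l - F (l - 1)))
      = (\<Sum>l=Suc k..m. F l - F (l - 1)) - (\<Sum>l=Suc k..m. e l * (F l - F (l - 1)))"
    by (simp add: sum_subtractf[symmetric] algebra_simps)
  also have "(\<Sum>l=Suc k..m. F l - F (l - 1)) = F m - F k" by (rule telescope_F[OF assms])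
  finally show ?thesis by (simp add: algebra_simps)
qed

lemma sum_PiE_power:
  fixes p e :: "nat \<Rightarrow> real"
  assumes "finite L"
  shows "(\<Sum>r\<in>PiE {..<b} (\<lambda>_. L). (1 - exp (- (\<Sum>i<b. v (r i)))) * (\<Prod>i<b. p (r i)))
       = (\<Sum>l\<in>L. p l) ^ b - (\<Sum>l\<in>L. exp (- v l) * p l) ^ b"
proof -
  have 1: "(\<Sum>l\<in>L. p l) ^ b = (\<Sum>r\<in>PiE {..<b} (\<lambda>_. L). \<Prod>i<b. p (r i))"
    using prod_sum_PiE[of "{..<b}" "\<lambda>_. L" "\<lambda>_ l. p l"] assms by simp
  have 2: "(\<Sum>l\<in>L. exp (- v l) * p l) ^ b = (\<Sum>r\<in>PiE {..<b} (\<lambda>_. L). \<Prod>i<b. exp (- v (r i)) * p (r i))"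
    using prod_sum_PiE[of "{..<b}" "\<lambda>_. L" "\<lambda>_ l. exp (- v l) * p l"] assms by simp
  have 3: "(\<Prod>i<b. exp (- v (r i)) * p (r i)) = exp (- (\<Sum>i<b. v (r i))) * (\<Prod>i<b. p (r i))" for r
    by (simp add: prod.distrib exp_sum[symmetric] sum_negf)
  show ?thesis unfolding 1 2 3
    by (simp add: sum_subtractf[symmetric] algebra_simps)
qed

context qs begin

lemma pE_first:
  assumes k: "1 \<le> k" "k \<le> m" and s: "s \<in> {t (k - 1)<..t k}"
  shows "pE k k s = cdf (W s) (t k - s)"
proof -
  interpret P: prob_space "W s" by (rule W_prob)
  have e: "E k k s = {..t k - s} - {..<0}" using k by (auto simp: E_def)
  have n: "{..<0::real} \<in> null_sets (W s)" using W_nonneg W_sets by (intro null_setsI) auto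
  show ?thesis unfolding pE_def e cdf_def2 using W_sets
    by (intro measure_Diff_null_set[OF _ n]) auto
qed

lemma pE_mid:
  assumes k: "1 \<le> k" "k < l" "l \<le> m" and s: "s \<in> {t (k - 1)<..t k}"
  shows "pE k l s = cdf (W s) (t l - s) - cdf (W s) (t (l - 1) - s)"
proof -
  interpret P: prob_space "W s" by (rule W_prob)
  have tk: "t k \<le> t (l - 1)" using k by (intro t_le) auto
  have tl: "t (l - 1) \<le> t l" using k by (intro t_le) auto
  have e: "E k l s = {..t l - s} - {..t (l - 1) - s}" using k s tk by (auto simp: E_def)
  show ?thesis unfolding pE_def e cdf_def2 using W_sets tl
    by (intro P.finite_measure_Diff) auto
qed

lemma pE_last:
  assumes k: "1 \<le> k" "k \<le> m" and s: "s \<in> {t (k - 1)<..t k}"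
  shows "pE k (Suc m) s = 1 - cdf (W s) (t m - s)"
proof -
  interpret P: prob_space "W s" by (rule W_prob)
  have tk: "t k \<le> t m" using k by (intro t_le) auto
  have e: "E k (Suc m) s = space (W s) - {..t m - s}" using k s tk by (auto simp: E_def space_W)
  show ?thesis unfolding pE_def e cdf_def2 using W_sets
    by (intro P.prob_compl) auto
qed

definition v :: "nat \<Rightarrow> nat \<Rightarrow> real" where
  "v k l = (\<Sum>x\<in>{1..m}. (if k \<le> x \<and> x < l then \<alpha> x else 0) + (if k \<le> x \<and> l \<le> x then \<beta> x else 0))"

lemma v_eq:
  assumes k: "1 \<le> k" "k \<le> l" "l \<le> Suc m"
  shows "v k l = (\<Sum>x=k..m. \<beta> x) + (\<Sum>x=k..l - 1. \<alpha> x - \<beta> x)"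
proof -
  have a: "(\<Sum>x\<in>{1..m}. (if k \<le> x \<and> x < l then \<alpha> x else 0)) = (\<Sum>x=k..l - 1. \<alpha> x)"
  proof -
    have "(\<Sum>x\<in>{1..m}. (if k \<le> x \<and> x < l then \<alpha> x else 0)) = (\<Sum>x\<in>{x\<in>{1..m}. k \<le> x \<and> x < l}. \<alpha> x)"
      by (rule sum.inter_filter[symmetric]) simp
    also have "{x\<in>{1..m}. k \<le> x \<and> x < l} = {k..l - 1}" using k by auto
    finally show ?thesis .
  qed
  have b: "(\<Sum>x\<in>{1..m}. (if k \<le> x \<and> l \<le> x then \<beta> x else 0)) = (\<Sum>x=l..m. \<beta> x)"
  proof -
    have "(\<Sum>x\<in>{1..m}. (if k \<le> x \<and> l \<le> x then \<beta> x else 0)) = (\<Sum>x\<in>{x\<in>{1..m}. k \<le> x \<and> l \<le> x}. \<beta> x)"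
      by (rule sum.inter_filter[symmetric]) simp
    also have "{x\<in>{1..m}. k \<le> x \<and> l \<le> x} = {l..m}" using k by auto
    finally show ?thesis .
  qed
  have c: "(\<Sum>x=k..m. \<beta> x) = (\<Sum>x=k..l - 1. \<beta> x) + (\<Sum>x=l..m. \<beta> x)"
  proof -
    have "{k..m} = {k..l - 1} \<union> {l..m}" using k by auto
    moreover have "{k..l - 1} \<inter> {l..m} = {}" using k by auto
    ultimately show ?thesis by (simp add: sum.union_disjoint)
  qed
  show ?thesis unfolding v_def sum.distrib a b c by (simp add: sum_subtractf)
qed

lemma v_nonneg: "0 \<le> v k l"
  unfolding v_def using \<alpha>_nonneg \<beta>_nonneg by (intro sum_nonneg) auto

lemma sum_pE: 
  assumes k: "1 \<le> k" "k \<le> m" and s: "s \<in> {t (k - 1)<..t k}"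
  shows "(\<Sum>l=k..Suc m. pE k l s) = 1"
proof -
  let ?F = "\<lambda>l. cdf (W s) (t l - s)"
  have "(\<Sum>l=k..Suc m. pE k l s) = pE k k s + (\<Sum>l=Suc k..m. pE k l s) + pE k (Suc m) s"
    using k by (simp add: sum.atLeast_Suc_atMost)
  also have "(\<Sum>l=Suc k..m. pE k l s) = (\<Sum>l=Suc k..m. ?F l - ?F (l - 1))"
    using k s by (intro sum.cong refl pE_mid) auto
  also have "\<dots> = ?F m - ?F k" by (rule telescope_F) (use k in auto)
  finally show ?thesis using pE_first[OF k s] pE_last[OF k s] by simp
qed

lemma sum_exp_pE:
  assumes k: "1 \<le> k" "k \<le> m" and s: "s \<in> {t (k - 1)<..t k}"
  shows "(\<Sum>l=k..Suc m. exp (- v k l) * pE k l s)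
    = exp (- (\<Sum>x=k..m. \<beta> x)) *
       (1 - (\<Sum>l=k+1..m. (1 - exp (- (\<Sum>x=k..l-1. \<alpha> x - \<beta> x))) * (cdf (W s) (t l - s) - cdf (W s) (t (l-1) - s)))
          - (1 - exp (- (\<Sum>x=k..m. \<alpha> x - \<beta> x))) * (1 - cdf (W s) (t m - s)))"
proof -
  let ?F = "\<lambda>l. cdf (W s) (t l - s)"
  let ?B = "\<Sum>x=k..m. \<beta> x"
  let ?e = "\<lambda>l. exp (- (\<Sum>x=k..l-1. \<alpha> x - \<beta> x))"
  have ev: "exp (- v k l) = exp (- ?B) * ?e l" if "k \<le> l" "l \<le> Suc m" for l
    using v_eq[of k l] k that by (simp add: exp_add[symmetric])
  have ek: "?e k = 1" using k by simp
  have "(\<Sum>l=k..Suc m. exp (- v k l) * pE k l s)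
      = exp (- v k k) * pE k k s + (\<Sum>l=Suc k..m. exp (- v k l) * pE k l s) + exp (- v k (Suc m)) * pE k (Suc m) s"
    using k by (simp add: sum.atLeast_Suc_atMost)
  also have "(\<Sum>l=Suc k..m. exp (- v k l) * pE k l s) = exp (- ?B) * (\<Sum>l=Suc k..m. ?e l * (?F l - ?F (l - 1)))"
    unfolding sum_distrib_left using k s by (intro sum.cong refl) (simp add: pE_mid ev)
  also have "exp (- v k k) * pE k k s = exp (- ?B) * ?F k"
    using ev[of k] ek pE_first[OF k s] k by simp
  also have "exp (- v k (Suc m)) * pE k (Suc m) s = exp (- ?B) * (?e (Suc m) * (1 - ?F m))"
    using ev[of "Suc m"] pE_last[OF k s] k by simp
  finally have "(\<Sum>l=k..Suc m. exp (- v k l) * pE k l s)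
      = exp (- ?B) * (?F k + (\<Sum>l=Suc k..m. ?e l * (?F l - ?F (l - 1))) + ?e (Suc m) * (1 - ?F m))"
    by (simp add: algebra_simps)
  also have "?F k + (\<Sum>l=Suc k..m. ?e l * (?F l - ?F (l - 1))) + ?e (Suc m) * (1 - ?F m)
     = 1 - (\<Sum>l=Suc k..m. (1 - ?e l) * (?F l - ?F (l - 1))) - (1 - ?e (Suc m)) * (1 - ?F m)"
    by (rule bracket_alg) (use k in auto)
  finally show ?thesis by simp
qed

lemma gamma_eq:
  assumes k: "1 \<le> k" "k \<le> m" and s: "s \<in> {t (k - 1)<..t k}"
  shows "(\<Sum>r\<in>PiE {..<b} (\<lambda>_. {k..Suc m}). (1 - exp (- (\<Sum>i<b. v k (r i)))) * (\<Prod>i<b. pE k (r i) s))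
       = gamma_fun (\<lambda>s. cdf (W s)) m t k b \<alpha> \<beta> s"
proof -
  have "(\<Sum>r\<in>PiE {..<b} (\<lambda>_. {k..Suc m}). (1 - exp (- (\<Sum>i<b. v k (r i)))) * (\<Prod>i<b. pE k (r i) s))
     = (\<Sum>l=k..Suc m. pE k l s) ^ b - (\<Sum>l=k..Suc m. exp (- v k l) * pE k l s) ^ b"
    by (rule sum_PiE_power) simp
  also have "\<dots> = gamma_fun (\<lambda>s. cdf (W s)) m t k b \<alpha> \<beta> s"
    unfolding sum_pE[OF k s] sum_exp_pE[OF k s] gamma_fun_def
    by (simp add: power_mult_distrib exp_of_nat_mult[symmetric] mult_ac)
  finally show ?thesis .
qed

end

context qs begin

lemma emeasure_mark_rect2:
  assumes J: "finite J" and X: "\<And>i. i \<in> J \<Longrightarrow> X i \<in> sets borel"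
  shows "emeasure (mark_law Bs W s) (B \<times> {w. \<forall>i\<in>J. w i \<in> X i})
       = emeasure (measure_pmf (Bs s)) B * (\<Prod>i\<in>J. emeasure (W s) (X i))"
proof -
  interpret P: product_prob_space "\<lambda>_. W s" UNIV
    using W_prob by (rule product_prob_spaceI)
  have S: "{w. \<forall>i\<in>J. w i \<in> X i} = prod_emb UNIV (\<lambda>_. W s) J (PiE J X)"
    by (simp add: prod_emb_def space_W restrict_PiE_iff Pi_iff set_eq_iff)
  have XS: "\<And>i. i \<in> J \<Longrightarrow> X i \<in> sets (W s)" using X W_sets by auto
  have Sm: "{w. \<forall>i\<in>J. w i \<in> X i} \<in> sets (PiM UNIV (\<lambda>_. W s))"
    unfolding S using XS J by (intro sets_PiM_I) auto
  have "emeasure (mark_law Bs W s) (B \<times> {w. \<forall>i\<in>J. w i \<in> X i})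
      = emeasure (measure_pmf (Bs s)) B * emeasure (PiM UNIV (\<lambda>_. W s)) {w. \<forall>i\<in>J. w i \<in> X i}"
    unfolding mark_law_def using Sm by (intro P.emeasure_pair_measure_Times) simp_all
  also have "emeasure (PiM UNIV (\<lambda>_. W s)) {w. \<forall>i\<in>J. w i \<in> X i} = (\<Prod>i\<in>J. emeasure (W s) (X i))"
    unfolding S by (rule emeasure_PiM_emb) (simp_all add: W_prob XS J)
  finally show ?thesis .
qed

lemma bint_le_T:
  "bint lam Bs W {p. fst p \<le> T} = ennreal (\<integral>s. indicator {0..T} s * lam s \<partial>lborel)"
proof -
  have int: "integrable lborel (\<lambda>s. indicator {0..T} s * lam s)"
    using lam_loc_int[of T] by (simp add: set_integrable_def)
  have "bint lam Bs W {p. fst p \<le> T} = (\<integral>\<^sup>+ s. ennreal (indicator {0..T} s * lam s) \<partial>lborel)"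
    unfolding batch_intensity_def
  proof (intro nn_integral_cong)
    fix s
    have "Pair s -` {p. fst p \<le> T} = (if s \<le> T then UNIV else {})" by auto
    moreover have "emeasure (mark_law Bs W s) UNIV = 1"
      using prob_space.emeasure_space_1[OF prob_mark] space_mark by metis
    ultimately show "indicator {0..} s * ennreal (lam s) * emeasure (mark_law Bs W s) (Pair s -` {p. fst p \<le> T})
        = ennreal (indicator {0..T} s * lam s)"
      by (auto simp: indicator_def)
  qed
  also have "\<dots> = ennreal (\<integral>s. indicator {0..T} s * lam s \<partial>lborel)"
    using int lam_nonneg by (intro nn_integral_eq_integral) (auto simp: indicator_def)
  finally show ?thesis .
qed

lemma le_T_sets: "{p. fst p \<le> T} \<in> sets point_space"
proof -
  have "{p. fst p \<le> T} = {p \<in> space point_space. fst p \<le> T}" by (simp add: space_point_space)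
  also have "\<dots> \<in> sets point_space" by measurable
  finally show ?thesis .
qed

lemma le_T_fin: "bint lam Bs W {p. fst p \<le> T} < \<infinity>"
  unfolding bint_le_T by simp

definition Z :: "(real \<times> mark) set" where
  "Z = {p. fst p \<le> t m \<and> (fst p \<le> 0 \<or> fst (snd p) = 0 \<or> (\<exists>i<fst (snd p). snd (snd p) i < 0))}"

lemma Z_sets: "Z \<in> sets point_space"
proof -
  have "Z = {p \<in> space point_space. fst p \<le> t m} \<inter> ({p \<in> space point_space. fst p \<le> 0} \<union>
     {p \<in> space point_space. fst (snd p) = 0} \<union> (\<Union>i. {p \<in> space point_space. i < fst (snd p) \<and> snd (snd p) i < 0}))"
    by (auto simp: Z_def space_point_space)
  also have "\<dots> \<in> sets point_space" by measurable
  finally show ?thesis .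
qed

lemma section_Z_null:
  assumes s: "0 < s"
  shows "emeasure (mark_law Bs W s) (Pair s -` Z) = 0"
proof -
  define N :: "mark set" where "N = ({0} \<times> {w. \<forall>i\<in>{}. w i \<in> UNIV}) \<union> (\<Union>j. UNIV \<times> {w. \<forall>i\<in>{j}. w i \<in> {..<0}})"
  have N1: "{0::nat} \<times> {w. \<forall>i\<in>{}. w i \<in> UNIV} \<in> null_sets (mark_law Bs W s)"
  proof (rule null_setsI)
    show "emeasure (mark_law Bs W s) ({0} \<times> {w. \<forall>i\<in>{}. w i \<in> UNIV}) = 0"
      using emeasure_mark_rect2[where J="{}" and X="\<lambda>_. UNIV" and B="{0}" and s=s] B_pos[of s]
      by (simp add: emeasure_pmf_single pmf_eq_0_set_pmf)
    have "{0::nat} \<times> {w. \<forall>i\<in>{}. w i \<in> (UNIV::real set)} = Pair s -` {p. fst (snd p) = 0}" by auto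
    also have "\<dots> \<in> sets (mark_law Bs W s)"
    proof (rule section_sets[OF W_sets])
      have "{p::real \<times> mark. fst (snd p) = 0} = {p \<in> space point_space. fst (snd p) = 0}"
        by (simp add: space_point_space)
      also have "\<dots> \<in> sets point_space" by measurable
      finally show "{p::real \<times> mark. fst (snd p) = 0} \<in> sets point_space" .
    qed
    finally show "{0::nat} \<times> {w. \<forall>i\<in>{}. w i \<in> UNIV} \<in> sets (mark_law Bs W s)" .
  qed
  have N2: "UNIV \<times> {w. \<forall>i\<in>{j}. w i \<in> {..<0::real}} \<in> null_sets (mark_law Bs W s)" for j
  proof (rule null_setsI)
    show "emeasure (mark_law Bs W s) (UNIV \<times> {w. \<forall>i\<in>{j}. w i \<in> {..<0}}) = 0"
      using emeasure_mark_rect2[where J="{j}" and X="\<lambda>_. {..<0}" and B=UNIV and s=s] W_nonneg[of s] by simp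
    have "UNIV \<times> {w. \<forall>i\<in>{j}. w i \<in> {..<0::real}} = Pair s -` {p. snd (snd p) j < 0}" by auto
    also have "\<dots> \<in> sets (mark_law Bs W s)"
    proof (rule section_sets[OF W_sets])
      have "{p. snd (snd p) j < (0::real)} = {p \<in> space point_space. snd (snd p) j < 0}"
        by (simp add: space_point_space)
      also have "\<dots> \<in> sets point_space" by measurable
      finally show "{p. snd (snd p) j < (0::real)} \<in> sets point_space" .
    qed
    finally show "UNIV \<times> {w. \<forall>i\<in>{j}. w i \<in> {..<0::real}} \<in> sets (mark_law Bs W s)" .
  qed
  have N: "N \<in> null_sets (mark_law Bs W s)"
    unfolding N_def using N1 N2 by (intro null_sets.Un null_sets_UN) auto
  have sub: "Pair s -` Z \<subseteq> N"
    using s by (auto simp: Z_def N_def)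
  have "Pair s -` Z \<in> null_sets (mark_law Bs W s)"
    by (rule null_sets_subset[OF N section_sets[OF W_sets Z_sets] sub])
  then show ?thesis by auto
qed

lemma bint_Z: "bint lam Bs W Z = 0"
proof -
  have "bint lam Bs W Z = (\<integral>\<^sup>+ (s::real). 0 \<partial>lborel)"
    unfolding batch_intensity_def
  proof (rule Nonnegative_Lebesgue_Integration.nn_integral_cong_AE)
    show "AE s in lborel. indicator {0..} s * ennreal (lam s) * emeasure (mark_law Bs W s) (Pair s -` Z) = 0"
      using AE_lborel_singleton[of "0::real"]
    proof eventually_elim
      case (elim s)
      show ?case
      proof (cases "0 < s")
        case True then show ?thesis using section_Z_null by simp
      next
        case False then show ?thesis using elim by (simp add: indicator_def)
      qed
    qed
  qed
  then show ?thesis by simp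
qed

lemma AE_Z: "AE \<omega> in M. Pts \<omega> \<inter> Z = {}"
proof -
  interpret prob_space M using proc by (rule pp_prob)
  have fin: "bint lam Bs W Z < \<infinity>" using bint_Z by simp
  note H = pp_single[OF proc Z_sets fin]
  have [measurable]: "(\<lambda>\<omega>. card (Pts \<omega> \<inter> Z)) \<in> measurable M (count_space UNIV)" by (rule H(2))
  have "prob {\<omega> \<in> space M. card (Pts \<omega> \<inter> Z) = 0} = 1"
    using H(3)[of 0] bint_Z by simp
  then have "AE \<omega> in M. card (Pts \<omega> \<inter> Z) = 0"
    by (subst prob_Collect_eq_1[symmetric]) (simp_all)
  with H(1) show ?thesis by eventually_elim auto
qed

lemma AE_fin: "AE \<omega> in M. finite (Pts \<omega> \<inter> {p. fst p \<le> t m})"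
  by (rule pp_single(1)[OF proc le_T_sets le_T_fin])

lemma LHS_meas:
  "(\<lambda>\<omega>. exp (- (\<Sum>k=1..m. \<alpha> k * real (queue_Q (Pts \<omega>) (t k)) + \<beta> k * real (queue_D (Pts \<omega>) (t k)))))
     \<in> borel_measurable M"
proof -
  have [measurable]: "(\<lambda>\<omega>. real (queue_Q (Pts \<omega>) T)) \<in> borel_measurable M" for T
    unfolding queue_Q_eq by (rule sum_meas[OF proc W_sets le_T_sets le_T_fin cntQ_meas])
  have [measurable]: "(\<lambda>\<omega>. real (queue_D (Pts \<omega>) T)) \<in> borel_measurable M" for T
    unfolding queue_D_eq by (rule sum_meas[OF proc W_sets le_T_sets le_T_fin cntD_meas])
  show ?thesis by measurable
qed

lemma cell_sets: "cell k b r \<in> sets point_space"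
proof -
  have "cell k b r = {p \<in> space point_space. fst p \<in> {t (k - 1)<..t k} \<and> fst (snd p) = b
     \<and> (\<forall>i\<in>{..<b}. 0 \<le> snd (snd p) i \<and> (r i \<noteq> k \<longrightarrow> t (r i - 1) < fst p + snd (snd p) i)
        \<and> (r i \<le> m \<longrightarrow> fst p + snd (snd p) i \<le> t (r i)))}"
    by (auto simp: cell_def E_def space_point_space)
  also have "\<dots> \<in> sets point_space" by measurable
  finally show ?thesis .
qed

end

context qs begin

definition hh :: "real \<Rightarrow> real \<Rightarrow> real" where
  "hh s d = (\<Sum>x=1..m. (if s \<le> t x \<and> t x < d then \<alpha> x else 0) + (if s \<le> t x \<and> 0 < d \<and> d \<le> t x then \<beta> x else 0))"

definition ff :: "real \<times> mark \<Rightarrow> real" where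
  "ff p = (\<Sum>i<fst (snd p). hh (fst p) (fst p + snd (snd p) i))"

definition JJ :: "nat \<Rightarrow> (nat \<times> nat \<times> (nat \<Rightarrow> nat)) set" where
  "JJ n = (SIGMA k:{1..m}. SIGMA b:{1..n}. PiE {..<b} (\<lambda>_. {k..Suc m}))"

definition cellj :: "nat \<times> nat \<times> (nat \<Rightarrow> nat) \<Rightarrow> (real \<times> mark) set" where
  "cellj j = cell (fst j) (fst (snd j)) (snd (snd j))"

definition cj :: "nat \<times> nat \<times> (nat \<Rightarrow> nat) \<Rightarrow> real" where
  "cj j = (\<Sum>i<fst (snd j). v (fst j) (snd (snd j) i))"

lemma JJ_finite: "finite (JJ n)"
  unfolding JJ_def by (intro finite_SigmaI finite_PiE) auto

lemma Q_real:
  assumes x: "x \<in> {1..m}" and fin: "finite (P \<inter> {p. fst p \<le> t m})"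
  shows "\<alpha> x * real (queue_Q P (t x)) = (\<Sum>p\<in>P \<inter> {p. fst p \<le> t m}. \<Sum>i<fst (snd p).
      (if fst p \<le> t x \<and> t x < fst p + snd (snd p) i then \<alpha> x else 0))"
proof -
  have tx: "t x \<le> t m" using x by (intro t_le) auto
  have "P \<inter> {p. fst p \<le> t x} = {p \<in> P \<inter> {p. fst p \<le> t m}. fst p \<le> t x}" using tx by auto
  then have "queue_Q P (t x) = (\<Sum>p\<in>{p \<in> P \<inter> {p. fst p \<le> t m}. fst p \<le> t x}. cntQ (t x) p)"
    unfolding queue_Q_eq by simp
  also have "\<dots> = (\<Sum>p\<in>P \<inter> {p. fst p \<le> t m}. if fst p \<le> t x then cntQ (t x) p else 0)"
    using fin by (rule sum.inter_filter)
  finally have "\<alpha> x * real (queue_Q P (t x)) = (\<Sum>p\<in>P \<inter> {p. fst p \<le> t m}. \<alpha> x * real (if fst p \<le> t x then cntQ (t x) p else 0))"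
    by (simp add: sum_distrib_left)
  also have "\<dots> = (\<Sum>p\<in>P \<inter> {p. fst p \<le> t m}. \<Sum>i<fst (snd p).
      (if fst p \<le> t x \<and> t x < fst p + snd (snd p) i then \<alpha> x else 0))"
    by (intro sum.cong refl) (auto simp: cntQ_def sum_distrib_left intro!: sum.cong)
  finally show ?thesis .
qed

lemma D_real:
  assumes x: "x \<in> {1..m}" and fin: "finite (P \<inter> {p. fst p \<le> t m})"
  shows "\<beta> x * real (queue_D P (t x)) = (\<Sum>p\<in>P \<inter> {p. fst p \<le> t m}. \<Sum>i<fst (snd p).
      (if fst p \<le> t x \<and> 0 < fst p + snd (snd p) i \<and> fst p + snd (snd p) i \<le> t x then \<beta> x else 0))"
proof -
  have tx: "t x \<le> t m" using x by (intro t_le) auto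
  have "P \<inter> {p. fst p \<le> t x} = {p \<in> P \<inter> {p. fst p \<le> t m}. fst p \<le> t x}" using tx by auto
  then have "queue_D P (t x) = (\<Sum>p\<in>{p \<in> P \<inter> {p. fst p \<le> t m}. fst p \<le> t x}. cntD (t x) p)"
    unfolding queue_D_eq by simp
  also have "\<dots> = (\<Sum>p\<in>P \<inter> {p. fst p \<le> t m}. if fst p \<le> t x then cntD (t x) p else 0)"
    using fin by (rule sum.inter_filter)
  finally have "\<beta> x * real (queue_D P (t x)) = (\<Sum>p\<in>P \<inter> {p. fst p \<le> t m}. \<beta> x * real (if fst p \<le> t x then cntD (t x) p else 0))"
    by (simp add: sum_distrib_left)
  also have "\<dots> = (\<Sum>p\<in>P \<inter> {p. fst p \<le> t m}. \<Sum>i<fst (snd p).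
      (if fst p \<le> t x \<and> 0 < fst p + snd (snd p) i \<and> fst p + snd (snd p) i \<le> t x then \<beta> x else 0))"
    by (intro sum.cong refl) (auto simp: cntD_def sum_distrib_left intro!: sum.cong)
  finally show ?thesis .
qed

lemma F1:
  assumes fin: "finite (P \<inter> {p. fst p \<le> t m})"
  shows "(\<Sum>k=1..m. \<alpha> k * real (queue_Q P (t k)) + \<beta> k * real (queue_D P (t k)))
       = (\<Sum>p\<in>P \<inter> {p. fst p \<le> t m}. ff p)"
proof -
  have "(\<Sum>k=1..m. \<alpha> k * real (queue_Q P (t k)) + \<beta> k * real (queue_D P (t k)))
     = (\<Sum>k=1..m. \<Sum>p\<in>P \<inter> {p. fst p \<le> t m}. \<Sum>i<fst (snd p).
          (if fst p \<le> t k \<and> t k < fst p + snd (snd p) i then \<alpha> k else 0) +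
          (if fst p \<le> t k \<and> 0 < fst p + snd (snd p) i \<and> fst p + snd (snd p) i \<le> t k then \<beta> k else 0))"
    by (intro sum.cong refl) (simp add: Q_real[OF _ fin] D_real[OF _ fin] sum.distrib)
  also have "\<dots> = (\<Sum>p\<in>P \<inter> {p. fst p \<le> t m}. \<Sum>k=1..m. \<Sum>i<fst (snd p).
          (if fst p \<le> t k \<and> t k < fst p + snd (snd p) i then \<alpha> k else 0) +
          (if fst p \<le> t k \<and> 0 < fst p + snd (snd p) i \<and> fst p + snd (snd p) i \<le> t k then \<beta> k else 0))"
    by (rule sum.swap)
  also have "\<dots> = (\<Sum>p\<in>P \<inter> {p. fst p \<le> t m}. ff p)"
    unfolding ff_def hh_def by (rule sum.cong[OF refl]) (rule sum.swap)
  finally show ?thesis .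
qed

end

context qs begin

lemma k_iff:
  assumes k: "1 \<le> k" "k \<le> m" and s: "s \<in> {t (k - 1)<..t k}" and x: "x \<in> {1..m}"
  shows "s \<le> t x \<longleftrightarrow> k \<le> x"
proof
  assume "k \<le> x" then show "s \<le> t x" using s x t_le[of k x] by auto
next
  assume a: "s \<le> t x"
  show "k \<le> x"
  proof (rule ccontr)
    assume "\<not> k \<le> x"
    then have "t x \<le> t (k - 1)" using k by (intro t_le) auto
    then show False using a s by auto
  qed
qed

lemma d_props:
  assumes k: "1 \<le> k" "k \<le> m" and s: "s \<in> {t (k - 1)<..t k}" and l: "l \<in> {k..Suc m}"
    and w: "w \<in> E k l s" and x: "x \<in> {k..m}"
  shows "(t x < s + w \<longleftrightarrow> x < l) \<and> (s + w \<le> t x \<longleftrightarrow> l \<le> x) \<and> 0 < s + w"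
proof -
  have w0: "0 \<le> w" and wl: "l \<noteq> k \<Longrightarrow> t (l - 1) < s + w" and wu: "l \<le> m \<Longrightarrow> s + w \<le> t l"
    using w by (auto simp: E_def)
  have t0k: "0 \<le> t (k - 1)" using k by (intro t_nonneg) auto
  have pos: "0 < s + w" using s w0 t0k by auto
  show ?thesis
  proof (cases "l = k")
    case True
    then have "s + w \<le> t k" using wu k by auto
    moreover have "t k \<le> t x" using x by (intro t_le) auto
    ultimately show ?thesis using True x pos by auto
  next
    case False
    then have lk: "k < l" using l by auto
    have A: "t x < s + w" if "x < l" 
    proof -
      have "t x \<le> t (l - 1)" using that l by (intro t_le) auto
      then show ?thesis using wl False by auto
    qed
    have B: "s + w \<le> t x" if "l \<le> x"
    proof -
      have "s + w \<le> t l" using wu that x by auto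
      also have "t l \<le> t x" using that x by (intro t_le) auto
      finally show ?thesis .
    qed
    show ?thesis using A B pos by (meson leD not_le)
  qed
qed

lemma hh_cell:
  assumes k: "1 \<le> k" "k \<le> m" and s: "s \<in> {t (k - 1)<..t k}" and l: "l \<in> {k..Suc m}"
    and w: "w \<in> E k l s"
  shows "hh s (s + w) = v k l"
  unfolding hh_def v_def
proof (rule sum.cong[OF refl])
  fix x assume x: "x \<in> {1..m}"
  show "(if s \<le> t x \<and> t x < s + w then \<alpha> x else 0) + (if s \<le> t x \<and> 0 < s + w \<and> s + w \<le> t x then \<beta> x else 0) =
        (if k \<le> x \<and> x < l then \<alpha> x else 0) + (if k \<le> x \<and> l \<le> x then \<beta> x else 0)"
  proof (cases "k \<le> x")
    case True
    then have "x \<in> {k..m}" using x by auto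
    from d_props[OF k s l w this] show ?thesis using k_iff[OF k s x] True by simp
  next
    case False
    then show ?thesis using k_iff[OF k s x] by simp
  qed
qed

lemma F2:
  assumes j: "j \<in> JJ n" and p: "p \<in> cellj j"
  shows "ff p = cj j"
proof -
  obtain k b r where jj: "j = (k, b, r)" by (cases j) auto
  have k: "1 \<le> k" "k \<le> m" and r: "r \<in> PiE {..<b} (\<lambda>_. {k..Suc m})"
    using j unfolding jj JJ_def by auto
  have s: "fst p \<in> {t (k - 1)<..t k}" and b: "fst (snd p) = b"
    and w: "\<And>i. i < b \<Longrightarrow> snd (snd p) i \<in> E k (r i) (fst p)"
    using p unfolding jj cellj_def cell_def by auto
  have "ff p = (\<Sum>i<b. hh (fst p) (fst p + snd (snd p) i))" unfolding ff_def b ..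
  also have "\<dots> = (\<Sum>i<b. v k (r i))"
  proof (rule sum.cong[OF refl])
    fix i assume i: "i \<in> {..<b}"
    then have "r i \<in> {k..Suc m}" using r by (auto simp: PiE_iff)
    then show "hh (fst p) (fst p + snd (snd p) i) = v k (r i)"
      using i by (intro hh_cell[OF k s _ w]) auto
  qed
  finally show ?thesis unfolding cj_def jj by simp
qed

lemma E_unique:
  assumes k: "1 \<le> k" "k \<le> m" and s: "s \<in> {t (k - 1)<..t k}"
    and l: "l \<in> {k..Suc m}" "l' \<in> {k..Suc m}" and w: "w \<in> E k l s" "w \<in> E k l' s"
  shows "l = l'"
proof -
  have *: False if a: "a < a'" "a \<in> {k..Suc m}" "a' \<in> {k..Suc m}" "w \<in> E k a s" "w \<in> E k a' s" for a a'
  proof -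
    have "s + w \<le> t a" using a by (auto simp: E_def)
    moreover have "t (a' - 1) < s + w" using a by (auto simp: E_def)
    moreover have "t a \<le> t (a' - 1)" using a by (intro t_le) auto
    ultimately show False by simp
  qed
  show ?thesis using *[of l l'] *[of l' l] l w by (cases "l < l'") (auto simp: not_less_iff_gr_or_eq)
qed

lemma k_unique:
  assumes k: "1 \<le> k" "k \<le> m" "1 \<le> k'" "k' \<le> m"
    and s: "s \<in> {t (k - 1)<..t k}" "s \<in> {t (k' - 1)<..t k'}"
  shows "k = k'"
proof -
  have *: False if a: "a < a'" "1 \<le> a" "a' \<le> m" "s \<in> {t (a - 1)<..t a}" "s \<in> {t (a' - 1)<..t a'}" for a a'
  proof -
    have "t a \<le> t (a' - 1)" using a by (intro t_le) auto
    then show False using a by auto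
  qed
  show ?thesis using *[of k k'] *[of k' k] k s by (cases "k < k'") (auto simp: not_less_iff_gr_or_eq)
qed

lemma F3:
  assumes j: "j \<in> JJ n" "j' \<in> JJ n" and ne: "j \<noteq> j'"
  shows "cellj j \<inter> cellj j' = {}"
proof (rule ccontr)
  assume "cellj j \<inter> cellj j' \<noteq> {}"
  then obtain p where p: "p \<in> cellj j" "p \<in> cellj j'" by auto
  obtain k b r where jj: "j = (k, b, r)" by (cases j) auto
  obtain k' b' r' where jj': "j' = (k', b', r')" by (cases j') auto
  have k: "1 \<le> k" "k \<le> m" and r: "r \<in> PiE {..<b} (\<lambda>_. {k..Suc m})"
    using j unfolding jj JJ_def by auto
  have k': "1 \<le> k'" "k' \<le> m" and r': "r' \<in> PiE {..<b'} (\<lambda>_. {k'..Suc m})"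
    using j unfolding jj' JJ_def by auto
  have s: "fst p \<in> {t (k - 1)<..t k}" and b: "fst (snd p) = b"
    and w: "\<And>i. i < b \<Longrightarrow> snd (snd p) i \<in> E k (r i) (fst p)"
    using p unfolding jj cellj_def cell_def by auto
  have s': "fst p \<in> {t (k' - 1)<..t k'}" and b': "fst (snd p) = b'"
    and w': "\<And>i. i < b' \<Longrightarrow> snd (snd p) i \<in> E k' (r' i) (fst p)"
    using p unfolding jj' cellj_def cell_def by auto
  have kk: "k = k'" by (rule k_unique[OF k k' s s'])
  have bb: "b = b'" using b b' by simp
  have "r = r'"
  proof (rule PiE_ext[OF r])
    show "r' \<in> PiE {..<b} (\<lambda>_. {k..Suc m})" using r' kk bb by simp
    fix i assume i: "i \<in> {..<b}"
    have ri: "r i \<in> {k..Suc m}" using r i by (auto simp: PiE_iff)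
    have ri': "r' i \<in> {k..Suc m}" using r' i kk bb by (auto simp: PiE_iff)
    have wi': "snd (snd p) i \<in> E k (r' i) (fst p)" using w'[of i] i kk bb by simp
    show "r i = r' i" using E_unique[OF k s ri ri' w[of i] wi'] i by simp
  qed
  then show False using ne jj jj' kk bb by simp
qed

lemma F4:
  assumes p: "p \<in> {p. fst p \<le> t m}" "p \<notin> Z" and bn: "fst (snd p) \<le> n"
  shows "\<exists>j\<in>JJ n. p \<in> cellj j"
proof -
  define s where "s = fst p"
  define b where "b = fst (snd p)"
  define w where "w = snd (snd p)"
  have nZ: "\<not> (fst p \<le> 0 \<or> fst (snd p) = 0 \<or> (\<exists>i<fst (snd p). snd (snd p) i < 0))"
    using p by (simp add: Z_def)
  have sp: "0 < s" "s \<le> t m" and b1: "1 \<le> b"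
    using p nZ unfolding s_def b_def by auto
  have w0: "\<And>i. i < b \<Longrightarrow> 0 \<le> w i"
    using nZ unfolding b_def w_def by (meson not_less)
  have m0: "0 < m" using sp t0 by (cases m) auto
  obtain k where k: "0 < k" "k \<le> m" "t (k - 1) < s" "s \<le> t k"
    using t_find[of 0 m s] m0 sp t0 by auto
  have k1: "1 \<le> k" using k by simp
  have sk: "s \<in> {t (k - 1)<..t k}" using k by simp
  have ex: "\<exists>l. l \<in> {k..Suc m} \<and> w i \<in> E k l s" if i: "i < b" for i
  proof (cases "s + w i \<le> t k")
    case True
    then show ?thesis using w0[OF i] k by (intro exI[of _ k]) (auto simp: E_def)
  next
    case False
    show ?thesis
    proof (cases "t m < s + w i")
      case True
      then show ?thesis using w0[OF i] k False by (intro exI[of _ "Suc m"]) (auto simp: E_def)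
    next
      case False2: False
      have km: "k < m"
      proof (rule ccontr)
        assume "\<not> k < m" then have "k = m" using k by simp
        then show False using False False2 by simp
      qed
      obtain l where l: "k < l" "l \<le> m" "t (l - 1) < s + w i" "s + w i \<le> t l"
        using t_find[OF km order.refl, of "s + w i"] False False2 by auto
      then show ?thesis using w0[OF i] by (intro exI[of _ l]) (auto simp: E_def)
    qed
  qed
  define r where "r = (\<lambda>i\<in>{..<b}. SOME l. l \<in> {k..Suc m} \<and> w i \<in> E k l s)"
  have r: "r i \<in> {k..Suc m} \<and> w i \<in> E k (r i) s" if "i < b" for i
    using someI_ex[OF ex[OF that]] that unfolding r_def by simp
  have rP: "r \<in> PiE {..<b} (\<lambda>_. {k..Suc m})" using r unfolding r_def by (auto simp: PiE_iff)
  have "(k, b, r) \<in> JJ n" using k1 k b1 bn rP unfolding JJ_def b_def by auto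
  moreover have "p \<in> cellj (k, b, r)"
    using sk r unfolding cellj_def cell_def s_def b_def w_def by auto
  ultimately show ?thesis by blast
qed

lemma cell_sub: "j \<in> JJ n \<Longrightarrow> cellj j \<subseteq> {p. fst p \<le> t m}"
proof
  fix p assume j: "j \<in> JJ n" and p: "p \<in> cellj j"
  obtain k b r where jj: "j = (k, b, r)" by (cases j) auto
  have "k \<le> m" using j unfolding jj JJ_def by auto
  then have "t k \<le> t m" by (intro t_le) auto
  moreover have "fst p \<le> t k" using p unfolding jj cellj_def cell_def by auto
  ultimately show "p \<in> {p. fst p \<le> t m}" by simp
qed

lemma F5:
  assumes fin: "finite (P \<inter> {p. fst p \<le> t m})" and Z: "P \<inter> Z = {}"
    and bn: "\<And>p. p \<in> P \<inter> {p. fst p \<le> t m} \<Longrightarrow> fst (snd p) \<le> n"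
  shows "(\<Sum>p\<in>P \<inter> {p. fst p \<le> t m}. ff p) = (\<Sum>j\<in>JJ n. cj j * real (card (P \<inter> cellj j)))"
proof -
  have U: "P \<inter> {p. fst p \<le> t m} = (\<Union>j\<in>JJ n. P \<inter> cellj j)"
  proof
    show "P \<inter> {p. fst p \<le> t m} \<subseteq> (\<Union>j\<in>JJ n. P \<inter> cellj j)"
    proof
      fix p assume p: "p \<in> P \<inter> {p. fst p \<le> t m}"
      then have "p \<notin> Z" using Z by auto
      with F4[of p n] p bn[OF p] show "p \<in> (\<Union>j\<in>JJ n. P \<inter> cellj j)" by auto
    qed
    show "(\<Union>j\<in>JJ n. P \<inter> cellj j) \<subseteq> P \<inter> {p. fst p \<le> t m}"
      using cell_sub by blast
  qed
  have finj: "finite (P \<inter> cellj j)" if "j \<in> JJ n" for j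
  proof -
    have "P \<inter> cellj j \<subseteq> P \<inter> {p. fst p \<le> t m}" using cell_sub[OF that] by auto
    then show ?thesis using fin by (rule finite_subset)
  qed
  have "(\<Sum>p\<in>P \<inter> {p. fst p \<le> t m}. ff p) = (\<Sum>j\<in>JJ n. \<Sum>p\<in>P \<inter> cellj j. ff p)"
  proof -
    have disj: "\<forall>i\<in>JJ n. \<forall>j\<in>JJ n. i \<noteq> j \<longrightarrow> (P \<inter> cellj i) \<inter> (P \<inter> cellj j) = {}"
      using F3 by blast
    have fj: "\<forall>j\<in>JJ n. finite (P \<inter> cellj j)" using finj by blast
    show ?thesis unfolding U by (rule sum.UNION_disjoint[OF JJ_finite fj disj])
  qed
  also have "\<dots> = (\<Sum>j\<in>JJ n. cj j * real (card (P \<inter> cellj j)))"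
  proof (intro sum.cong refl)
    fix j assume j: "j \<in> JJ n"
    have "(\<Sum>p\<in>P \<inter> cellj j. ff p) = (\<Sum>p\<in>P \<inter> cellj j. cj j)"
      using F2[OF j] by (intro sum.cong) auto
    then show "(\<Sum>p\<in>P \<inter> cellj j. ff p) = cj j * real (card (P \<inter> cellj j))" by simp
  qed
  finally show ?thesis .
qed

end

lemma sum_Sigma':
  "finite A \<Longrightarrow> (\<forall>x\<in>A. finite (B x)) \<Longrightarrow> sum f (Sigma A B) = (\<Sum>x\<in>A. \<Sum>y\<in>B x. f (x, y))"
  using sum.Sigma[of A B "\<lambda>x y. f (x, y)"] by simp

context qs begin

lemma JJ_sum: "(\<Sum>j\<in>JJ n. f j) = (\<Sum>k=1..m. \<Sum>b=1..n. \<Sum>r\<in>PiE {..<b} (\<lambda>_. {k..Suc m}). f (k, b, r))"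
proof -
  have "(\<Sum>j\<in>JJ n. f j) = (\<Sum>k=1..m. \<Sum>q\<in>(SIGMA b:{1..n}. PiE {..<b} (\<lambda>_. {k..Suc m})). f (k, q))"
    unfolding JJ_def by (rule sum_Sigma') (auto intro!: finite_SigmaI finite_PiE)
  also have "\<dots> = (\<Sum>k=1..m. \<Sum>b=1..n. \<Sum>r\<in>PiE {..<b} (\<lambda>_. {k..Suc m}). f (k, b, r))"
    by (intro sum.cong refl sum_Sigma') (auto intro!: finite_PiE)
  finally show ?thesis .
qed

definition Y :: "nat \<Rightarrow> nat \<Rightarrow> real \<Rightarrow> real" where
  "Y k b s = (\<Sum>r\<in>PiE {..<b} (\<lambda>_. {k..Suc m}). (1 - exp (- (\<Sum>i<b. v k (r i)))) * G k b r s)"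

lemma coef_nonneg: "0 \<le> 1 - exp (- (\<Sum>i<b. v k (r i)))"
  using v_nonneg by (simp add: sum_nonneg)

lemma coef_le1: "1 - exp (- (\<Sum>i<b. v k (r i))) \<le> 1" by simp

lemma Y_integral:
  assumes k: "k \<le> m"
  shows "integrable lborel (Y k b)"
    and "integral\<^sup>L lborel (Y k b) = (\<Sum>r\<in>PiE {..<b} (\<lambda>_. {k..Suc m}). (1 - exp (- (\<Sum>i<b. v k (r i)))) * integral\<^sup>L lborel (G k b r))"
proof -
  show "integrable lborel (Y k b)"
    unfolding Y_def[abs_def] by (intro Bochner_Integration.integrable_sum integrable_mult_right G_integrable[OF k])
  show "integral\<^sup>L lborel (Y k b) = (\<Sum>r\<in>PiE {..<b} (\<lambda>_. {k..Suc m}). (1 - exp (- (\<Sum>i<b. v k (r i)))) * integral\<^sup>L lborel (G k b r))"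
    unfolding Y_def[abs_def]
    by (subst Bochner_Integration.integral_sum) (intro integrable_mult_right G_integrable[OF k], simp)
qed

lemma Y_factor: "Y k b s = indicator {t (k - 1)<..t k} s * lam s * pmf (Bs s) b *
   (\<Sum>r\<in>PiE {..<b} (\<lambda>_. {k..Suc m}). (1 - exp (- (\<Sum>i<b. v k (r i)))) * (\<Prod>i<b. pE k (r i) s))"
  unfolding Y_def G_def sum_distrib_left by (intro sum.cong refl) (simp add: mult_ac)

lemma Y_eq:
  assumes k: "1 \<le> k" "k \<le> m" and s: "s \<noteq> t (k - 1)" "s \<noteq> t k"
  shows "Y k b s = indicator {t (k - 1)..<t k} s *\<^sub>R (gamma_fun (\<lambda>s. cdf (W s)) m t k b \<alpha> \<beta> s * pmf (Bs s) b * lam s)"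
proof (cases "s \<in> {t (k - 1)<..t k}")
  case True
  then have "s \<in> {t (k - 1)..<t k}" using s by auto
  then show ?thesis unfolding Y_factor gamma_eq[OF k True] using True by (simp add: mult_ac)
next
  case False
  then have "s \<notin> {t (k - 1)..<t k}" using s by auto
  then show ?thesis unfolding Y_factor using False by simp
qed

lemma xk_eq:
  assumes k: "1 \<le> k" "k \<le> m"
  shows "integral\<^sup>L lborel (Y k b) = (\<integral>s\<in>{t (k - 1)..<t k}. gamma_fun (\<lambda>s. cdf (W s)) m t k b \<alpha> \<beta> s * pmf (Bs s) b * lam s \<partial>lborel)"
  unfolding set_lebesgue_integral_def
proof (rule integral_discrete_difference[where X="{t (k - 1), t k}"])
  fix x assume "x \<notin> {t (k - 1), t k}"
  then show "Y k b x = indicator {t (k - 1)..<t k} x *\<^sub>R (gamma_fun (\<lambda>s. cdf (W s)) m t k b \<alpha> \<beta> x * pmf (Bs x) b * lam x)"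
    by (intro Y_eq[OF k]) auto
qed auto

lemma Y_nonneg: "0 \<le> Y k b s"
  unfolding Y_def by (intro sum_nonneg mult_nonneg_nonneg coef_nonneg G_nonneg)

lemma sum_prod_pE:
  fixes b :: nat
  assumes k: "1 \<le> k" "k \<le> m" and s: "s \<in> {t (k - 1)<..t k}"
  shows "(\<Sum>r\<in>PiE {..<b} (\<lambda>_. {k..Suc m}). \<Prod>i<b. pE k (r i) s) = 1"
proof -
  have e: "(\<Sum>l\<in>{k..Suc m}. pE k l s) = 1" using sum_pE[OF k s] .
  have "(\<Prod>i\<in>{..<b}. \<Sum>l\<in>{k..Suc m}. pE k l s) = (\<Sum>r\<in>PiE {..<b} (\<lambda>_. {k..Suc m}). \<Prod>i<b. pE k (r i) s)"
    by (rule prod_sum_PiE) auto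
  then show ?thesis unfolding e by simp
qed

lemma Y_le:
  assumes k: "1 \<le> k" "k \<le> m"
  shows "Y k b s \<le> indicator {t (k - 1)<..t k} s * lam s * pmf (Bs s) b"
proof -
  have "Y k b s \<le> (\<Sum>r\<in>PiE {..<b} (\<lambda>_. {k..Suc m}). G k b r s)"
    unfolding Y_def by (intro sum_mono mult_left_le_one_le coef_le1 coef_nonneg G_nonneg)
  also have "\<dots> = indicator {t (k - 1)<..t k} s * lam s * pmf (Bs s) b *
      (\<Sum>r\<in>PiE {..<b} (\<lambda>_. {k..Suc m}). \<Prod>i<b. pE k (r i) s)"
    unfolding G_def sum_distrib_left by (simp add: mult_ac)
  also have "\<dots> = indicator {t (k - 1)<..t k} s * lam s * pmf (Bs s) b"
    by (cases "s \<in> {t (k - 1)<..t k}") (simp_all add: sum_prod_pE[OF k])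
  finally show ?thesis .
qed

end

context qs begin

definition xk :: "nat \<Rightarrow> nat \<Rightarrow> real" where
  "xk k b = (\<integral>s\<in>{t (k-1)..<t k}. gamma_fun (\<lambda>s. cdf (W s)) m t k (Suc b) \<alpha> \<beta> s * pmf (Bs s) (Suc b) * lam s \<partial>lborel)"

lemma cj_nonneg: "0 \<le> cj j"
  unfolding cj_def using v_nonneg by (intro sum_nonneg) auto

lemma xk_Y: "1 \<le> k \<Longrightarrow> k \<le> m \<Longrightarrow> xk k b = integral\<^sup>L lborel (Y k (Suc b))"
  unfolding xk_def using xk_eq by simp

lemma RHS_n:
  "prob_space.expectation M (\<lambda>\<omega>. exp (- (\<Sum>j\<in>JJ n. cj j * real (card (Pts \<omega> \<inter> cellj j)))))
     = exp (- (\<Sum>k=1..m. \<Sum>b<n. xk k b))"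
proof -
  have "prob_space.expectation M (\<lambda>\<omega>. exp (- (\<Sum>j\<in>JJ n. cj j * real (card (Pts \<omega> \<inter> cellj j)))))
      = exp (- (\<Sum>j\<in>JJ n. (1 - exp (- cj j)) * enn2real (bint lam Bs W (cellj j))))"
  proof (rule pp_laplace_finite[OF proc JJ_finite])
    fix j assume j: "j \<in> JJ n"
    obtain k b r where jj: "j = (k, b, r)" by (cases j) auto
    have k: "1 \<le> k" "k \<le> m" using j unfolding jj JJ_def by auto
    show "cellj j \<in> sets point_space" unfolding cellj_def by (rule cell_sets)
    show "bint lam Bs W (cellj j) < \<infinity>" unfolding jj cellj_def using bint_cell[OF k] by simp
    show "0 \<le> cj j" by (rule cj_nonneg)
  next
    fix i j assume "i \<in> JJ n" "j \<in> JJ n" "i \<noteq> j"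
    then show "cellj i \<inter> cellj j = {}" by (rule F3)
  qed
  also have "(\<Sum>j\<in>JJ n. (1 - exp (- cj j)) * enn2real (bint lam Bs W (cellj j)))
      = (\<Sum>k=1..m. \<Sum>b<n. xk k b)"
  proof -
    have "(\<Sum>j\<in>JJ n. (1 - exp (- cj j)) * enn2real (bint lam Bs W (cellj j)))
      = (\<Sum>k=1..m. \<Sum>b=1..n. \<Sum>r\<in>PiE {..<b} (\<lambda>_. {k..Suc m}).
          (1 - exp (- cj (k, b, r))) * enn2real (bint lam Bs W (cellj (k, b, r))))"
      by (rule JJ_sum)
    also have "\<dots> = (\<Sum>k=1..m. \<Sum>b=1..n. integral\<^sup>L lborel (Y k b))"
    proof (intro sum.cong refl)
      fix k b assume k: "k \<in> {1..m}"
      then have k1: "1 \<le> k" "k \<le> m" by auto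
      have "(\<Sum>r\<in>PiE {..<b} (\<lambda>_. {k..Suc m}). (1 - exp (- cj (k, b, r))) * enn2real (bint lam Bs W (cellj (k, b, r))))
          = (\<Sum>r\<in>PiE {..<b} (\<lambda>_. {k..Suc m}). (1 - exp (- (\<Sum>i<b. v k (r i)))) * integral\<^sup>L lborel (G k b r))"
      proof (intro sum.cong refl)
        fix r
        have "0 \<le> integral\<^sup>L lborel (G k b r)" using G_nonneg by (intro Bochner_Integration.integral_nonneg) auto
        then show "(1 - exp (- cj (k, b, r))) * enn2real (bint lam Bs W (cellj (k, b, r)))
            = (1 - exp (- (\<Sum>i<b. v k (r i)))) * integral\<^sup>L lborel (G k b r)"
          unfolding cellj_def cj_def using bint_cell[OF k1] by simp
      qed
      also have "\<dots> = integral\<^sup>L lborel (Y k b)" using Y_integral(2)[OF k1(2)] by simp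
      finally show "(\<Sum>r\<in>PiE {..<b} (\<lambda>_. {k..Suc m}). (1 - exp (- cj (k, b, r))) * enn2real (bint lam Bs W (cellj (k, b, r))))
          = integral\<^sup>L lborel (Y k b)" .
    qed
    also have "\<dots> = (\<Sum>k=1..m. \<Sum>b<n. xk k b)"
    proof (rule sum.cong[OF refl])
      fix k assume "k \<in> {1..m}"
      then show "(\<Sum>b=1..n. integral\<^sup>L lborel (Y k b)) = (\<Sum>b<n. xk k b)"
        by (simp add: sum.atLeast1_atMost_eq xk_Y)
    qed
    finally show ?thesis .
  qed
  finally show ?thesis .
qed

lemma xk_nonneg: "1 \<le> k \<Longrightarrow> k \<le> m \<Longrightarrow> 0 \<le> xk k b"
  unfolding xk_Y using Y_nonneg by (simp add: xk_Y Bochner_Integration.integral_nonneg)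

lemma pmf_Suc_sum: "(\<Sum>b\<le>N. pmf p (Suc b)) \<le> 1"
proof -
  have "(\<Sum>b\<le>N. pmf p (Suc b)) = (\<Sum>x\<in>Suc ` {..N}. pmf p x)"
    by (simp add: sum.reindex)
  also have "\<dots> = measure (measure_pmf p) (Suc ` {..N})"
    by (simp add: measure_measure_pmf_finite)
  also have "\<dots> \<le> 1" by (rule measure_pmf.prob_le_1)
  finally show ?thesis .
qed

lemma xk_summable:
  assumes k: "1 \<le> k" "k \<le> m"
  shows "summable (xk k)"
proof (rule bounded_imp_summable)
  show "0 \<le> xk k b" for b using xk_nonneg[OF k] .
  fix N
  have int: "integrable lborel (Y k (Suc b))" for b by (rule Y_integral(1)[OF k(2)])
  have "(\<Sum>b\<le>N. xk k b) = integral\<^sup>L lborel (\<lambda>s. \<Sum>b\<le>N. Y k (Suc b) s)"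
    using int by (simp add: xk_Y[OF k] Bochner_Integration.integral_sum)
  also have "\<dots> \<le> integral\<^sup>L lborel (\<lambda>s. indicator {t (k - 1)<..t k} s * lam s)"
  proof (rule Bochner_Integration.integral_mono)
    show "integrable lborel (\<lambda>s. \<Sum>b\<le>N. Y k (Suc b) s)"
      using int by (intro Bochner_Integration.integrable_sum) auto
    show "integrable lborel (\<lambda>s. indicator {t (k - 1)<..t k} s * lam s)"
      by (rule lam_ind_integrable[OF k(2)])
    fix s
    have "(\<Sum>b\<le>N. Y k (Suc b) s) \<le> (\<Sum>b\<le>N. indicator {t (k - 1)<..t k} s * lam s * pmf (Bs s) (Suc b))"
      by (intro sum_mono Y_le[OF k])
    also have "\<dots> = indicator {t (k - 1)<..t k} s * lam s * (\<Sum>b\<le>N. pmf (Bs s) (Suc b))"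
      by (simp add: sum_distrib_left)
    also have "\<dots> \<le> indicator {t (k - 1)<..t k} s * lam s * 1"
      using lam_nonneg pmf_Suc_sum by (intro mult_left_mono) auto
    finally show "(\<Sum>b\<le>N. Y k (Suc b) s) \<le> indicator {t (k - 1)<..t k} s * lam s" by simp
  qed
  finally show "(\<Sum>b\<le>N. xk k b) \<le> integral\<^sup>L lborel (\<lambda>s. indicator {t (k - 1)<..t k} s * lam s)" .
qed

end

context qs begin

lemma cellj_card_meas:
  assumes j: "j \<in> JJ n"
  shows "(\<lambda>\<omega>. card (Pts \<omega> \<inter> cellj j)) \<in> measurable M (count_space UNIV)"
proof -
  obtain k b r where jj: "j = (k, b, r)" by (cases j) auto
  have k: "1 \<le> k" "k \<le> m" using j unfolding jj JJ_def by auto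
  have fin: "bint lam Bs W (cellj j) < \<infinity>" unfolding jj cellj_def using bint_cell[OF k] by simp
  show ?thesis using pp_single(2)[OF proc _ fin] cell_sets unfolding cellj_def by simp
qed

lemma main:
  "prob_space.expectation M
     (\<lambda>\<omega>. exp (- (\<Sum>k=1..m. \<alpha> k * real (queue_Q (Pts \<omega>) (t k)) + \<beta> k * real (queue_D (Pts \<omega>) (t k)))))
   = exp (- (\<Sum>k=1..m. \<Sum>b. xk k b))"
proof -
  interpret prob_space M using proc by (rule pp_prob)
  define f where "f \<omega> = exp (- (\<Sum>k=1..m. \<alpha> k * real (queue_Q (Pts \<omega>) (t k)) + \<beta> k * real (queue_D (Pts \<omega>) (t k))))" for \<omega>
  define sN where "sN n \<omega> = exp (- (\<Sum>j\<in>JJ n. cj j * real (card (Pts \<omega> \<inter> cellj j))))" for n \<omega>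
  have lim1: "(\<lambda>n. expectation (sN n)) \<longlonglongrightarrow> expectation f"
  proof (rule integral_dominated_convergence[where w="\<lambda>_. 1"])
    show "f \<in> borel_measurable M" unfolding f_def by (rule LHS_meas)
    show "sN n \<in> borel_measurable M" for n
    proof -
      have [measurable]: "(\<lambda>\<omega>. card (Pts \<omega> \<inter> cellj j)) \<in> measurable M (count_space UNIV)" if "j \<in> JJ n" for j
        using cellj_card_meas[OF that] .
      have "(\<lambda>\<omega>. \<Sum>j\<in>JJ n. cj j * real (card (Pts \<omega> \<inter> cellj j))) \<in> borel_measurable M"
        by (intro borel_measurable_sum) measurable
      then show ?thesis unfolding sN_def[abs_def] by measurable
    qed
    show "integrable M (\<lambda>_. 1::real)" by simp
    show "AE \<omega> in M. norm (sN n \<omega>) \<le> 1" for n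
      unfolding sN_def using cj_nonneg by (intro AE_I2) (auto intro!: sum_nonneg)
    show "AE \<omega> in M. (\<lambda>n. sN n \<omega>) \<longlonglongrightarrow> f \<omega>"
      using AE_fin AE_Z
    proof eventually_elim
      case (elim \<omega>)
      define P where "P = Pts \<omega>"
      have fin: "finite (P \<inter> {p. fst p \<le> t m})" and Z: "P \<inter> Z = {}" using elim unfolding P_def by auto
      define N0 where "N0 = Max (insert 0 ((\<lambda>p. fst (snd p)) ` (P \<inter> {p. fst p \<le> t m})))"
      have "eventually (\<lambda>n. sN n \<omega> = f \<omega>) sequentially"
      proof (rule eventually_sequentiallyI[of N0])
        fix n assume n: "N0 \<le> n"
        have bn: "fst (snd p) \<le> n" if "p \<in> P \<inter> {p. fst p \<le> t m}" for p
        proof -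
          have "fst (snd p) \<le> N0" unfolding N0_def using fin that by (intro Max_ge) auto
          then show ?thesis using n by simp
        qed
        have e1: "(\<Sum>k=1..m. \<alpha> k * real (queue_Q P (t k)) + \<beta> k * real (queue_D P (t k)))
            = (\<Sum>p\<in>P \<inter> {p. fst p \<le> t m}. ff p)" by (rule F1[OF fin])
        have e2: "(\<Sum>p\<in>P \<inter> {p. fst p \<le> t m}. ff p) = (\<Sum>j\<in>JJ n. cj j * real (card (P \<inter> cellj j)))"
          by (rule F5[OF fin Z bn])
        show "sN n \<omega> = f \<omega>"
          unfolding sN_def f_def using e1 e2 unfolding P_def by simp
      qed
      then show ?case by (rule tendsto_eventually)
    qed
  qed
  have lim2: "(\<lambda>n. exp (- (\<Sum>k=1..m. \<Sum>b<n. xk k b))) \<longlonglongrightarrow> exp (- (\<Sum>k=1..m. \<Sum>b. xk k b))"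
    by (intro tendsto_exp tendsto_minus tendsto_sum summable_LIMSEQ xk_summable) auto
  have "(\<lambda>n. expectation (sN n)) = (\<lambda>n. exp (- (\<Sum>k=1..m. \<Sum>b<n. xk k b)))"
    unfolding sN_def by (rule ext) (rule RHS_n)
  with lim1 lim2 have "expectation f = exp (- (\<Sum>k=1..m. \<Sum>b. xk k b))"
    using LIMSEQ_unique by metis
  then show ?thesis unfolding f_def .
qed

end

theorem theorem3:
  fixes M :: "'a measure" and Pts :: "'a \<Rightarrow> (real \<times> mark) set"
    and lam :: "real \<Rightarrow> real" and Bs :: "real \<Rightarrow> nat pmf" and W :: "real \<Rightarrow> real measure"
    and m :: nat and t :: "nat \<Rightarrow> real" and \<alpha> \<beta> :: "nat \<Rightarrow> real"
  assumes lam_nonneg: "\<And>s. 0 \<le> lam s"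
    and lam_meas: "lam \<in> borel_measurable borel"
    and lam_loc_int: "\<And>T. set_integrable lborel {0..T} lam"
    and B_pos: "\<And>s. 0 \<notin> set_pmf (Bs s)"
    and B_meas: "\<And>b. (\<lambda>s. pmf (Bs s) b) \<in> borel_measurable borel"
    and W_prob: "\<And>s. prob_space (W s)"
    and W_sets: "\<And>s. sets (W s) = sets borel"
    and W_nonneg: "\<And>s. emeasure (W s) {..<0} = 0"
    and W_meas: "W \<in> measurable borel (subprob_algebra borel)"
    and proc: "batch_poisson_process M Pts lam Bs W"
    and t0: "t 0 = 0"
    and t_mono: "\<And>k. k < m \<Longrightarrow> t k < t (Suc k)"
    and \<alpha>_nonneg: "\<And>k. k \<in> {1..m} \<Longrightarrow> 0 \<le> \<alpha> k"
    and \<beta>_nonneg: "\<And>k. k \<in> {1..m} \<Longrightarrow> 0 \<le> \<beta> k"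
  shows "prob_space.expectation M
           (\<lambda>\<omega>. exp (- (\<Sum>k=1..m. \<alpha> k * real (queue_Q (Pts \<omega>) (t k)) + \<beta> k * real (queue_D (Pts \<omega>) (t k)))))
         = exp (- (\<Sum>k=1..m. \<Sum>b. (\<integral>s\<in>{t (k-1)..<t k}.
              gamma_fun (\<lambda>s. cdf (W s)) m t k (Suc b) \<alpha> \<beta> s * pmf (Bs s) (Suc b) * lam s \<partial>lborel)))"
proof -
  interpret qs M Pts lam Bs W m t \<alpha> \<beta>
    by (rule qs.intro) (fact assms)+
  show ?thesis using main unfolding xk_def .
qed

end
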